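(* Let $n\ge t\ge 1$ be integers and let $\Bbbk$ be a field. If $n\ge 2t+1$, then $\widetilde{H}_p(\Omega^n_t;\Bbbk)\cong \widetilde{H}_{p-2}(\Omega^{n-t-1}_t;\Bbbk)$ for every integer $p$. Otherwise, for every integer $p$, $$\widetilde{H}_p(\Omega^n_t;\Bbbk)\cong\begin{cases}\widetilde{H}_p(\{\emptyset\};\Bbbk) & \text{if } n=t,\\ \widetilde{H}_{p-1}(\{\emptyset\};\Bbbk) & \text{if } n=t+1,\\ 0 & \text{if } t+2\le n\le 2t.\end{cases}$$
   Context: For integers $n\ge t\ge 1$, $\Omega^n_t$ is the simplicial complex on vertex set $\{1,\dots,n\}$ whose facets are the sets $\{1,\dots,n\}\setminus\{i,i+1,\dots,i+t-1\}$ for $i=1,\dots,n-t+1$ (so $\Omega^t_t=\{\emptyset\}$). $\widetilde{H}_p(\cdot;\Bbbk)$ denotes reduced simplicial homology over $\Bbbk$. The irrelevant complex $\{\emptyset\}$ has $\widetilde{H}_{-1}(\{\emptyset\};\Bbbk)\cong\Bbbk$ and $\widetilde{H}_p(\{\emptyset\};\Bbbk)=0$ for $p\neq -1$. *)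

theory Defs
  imports Complex_Main "HOL-Library.Function_Algebras"
begin

text \<open>Simplicial complexes on vertex set nat are represented by their set of faces
(a downward closed family of finite sets, containing the empty face).\<close>

definition Omega :: "nat \<Rightarrow> nat \<Rightarrow> nat set set" where
  "Omega n t = {\<sigma>. \<exists>i\<in>{1..n - t + 1}. \<sigma> \<subseteq> {1..n} - {i..i + t - 1}}"

definition irrelevant_complex :: "nat set set" where
  "irrelevant_complex = {{}}"

text \<open>A p-face has p+1 vertices; C_(-1) is spanned by the empty face. Faces are
oriented by the natural order of their vertices.\<close>

definition faces :: "nat set set \<Rightarrow> int \<Rightarrow> nat set set" where
  "faces K p = {\<sigma>\<in>K. finite \<sigma> \<and> int (card \<sigma>) = p + 1}"

definition chains :: "nat set set \<Rightarrow> int \<Rightarrow> (nat set \<Rightarrow> 'k::field) set" where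
  "chains K p = {c. \<forall>\<sigma>. c \<sigma> \<noteq> 0 \<longrightarrow> \<sigma> \<in> faces K p}"

definition bd :: "nat set set \<Rightarrow> int \<Rightarrow> (nat set \<Rightarrow> 'k::field) \<Rightarrow> (nat set \<Rightarrow> 'k)" where
  "bd K p c = (\<lambda>\<tau>. if \<tau> \<in> faces K (p - 1)
      then (\<Sum>v\<in>{v. v \<notin> \<tau> \<and> insert v \<tau> \<in> faces K p}.
              (-1) ^ card {u\<in>\<tau>. u < v} * c (insert v \<tau>))
      else 0)"

definition cycles :: "nat set set \<Rightarrow> int \<Rightarrow> (nat set \<Rightarrow> 'k::field) set" where
  "cycles K p = {c\<in>chains K p. bd K p c = 0}"

definition boundaries :: "nat set set \<Rightarrow> int \<Rightarrow> (nat set \<Rightarrow> 'k::field) set" where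
  "boundaries K p = bd K (p + 1) ` chains K (p + 1)"

abbreviation fscale :: "'k::field \<Rightarrow> (nat set \<Rightarrow> 'k) \<Rightarrow> (nat set \<Rightarrow> 'k)" where
  "fscale a f \<equiv> (\<lambda>x. a * f x)"

lemma vector_space_fscale: "vector_space (fscale :: 'k::field \<Rightarrow> _)"
  by unfold_locales (auto simp: algebra_simps fun_eq_iff)

definition rhom_dim :: "'k::field itself \<Rightarrow> nat set set \<Rightarrow> int \<Rightarrow> nat" where
  "rhom_dim TYPE('k) K p =
     vector_space.dim (fscale :: 'k \<Rightarrow> _) (cycles K p :: (nat set \<Rightarrow> 'k) set)
   - vector_space.dim (fscale :: 'k \<Rightarrow> _) (boundaries K p :: (nat set \<Rightarrow> 'k) set)"

end

theory Submission
  imports Defs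
begin

interpretation FS: vector_space "fscale :: 'k::field \<Rightarrow> (nat set \<Rightarrow> 'k) \<Rightarrow> (nat set \<Rightarrow> 'k)"
  by (rule vector_space_fscale)

lemma span_disjoint_indep:
  fixes A C :: "(nat set \<Rightarrow> 'k::field) set"
  assumes ind: "FS.independent (A \<union> C)" and dis: "A \<inter> C = {}" and fin: "finite (A \<union> C)"
    and xa: "x \<in> FS.span A" and xc: "x \<in> FS.span C"
  shows "x = 0"
proof -
  have finA: "finite A" and finC: "finite C" using fin by auto
  have "x \<in> range (\<lambda>u. \<Sum>v\<in>A. fscale (u v) v)" using xa FS.span_finite[OF finA] by blast
  then obtain a where a: "x = (\<Sum>v\<in>A. fscale (a v) v)" by blast
  have "x \<in> range (\<lambda>u. \<Sum>v\<in>C. fscale (u v) v)" using xc FS.span_finite[OF finC] by blast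
  then obtain c where c: "x = (\<Sum>v\<in>C. fscale (c v) v)" by blast
  define u where "u v = (if v \<in> A then a v else - c v)" for v
  have "(\<Sum>v\<in>A \<union> C. fscale (u v) v) = (\<Sum>v\<in>A. fscale (u v) v) + (\<Sum>v\<in>C. fscale (u v) v)"
    by (rule sum.union_disjoint) (use finA finC dis in auto)
  also have "(\<Sum>v\<in>A. fscale (u v) v) = x" unfolding a u_def by (rule sum.cong) auto
  also have "(\<Sum>v\<in>C. fscale (u v) v) = - x"
  proof -
    have "(\<Sum>v\<in>C. fscale (u v) v) = (\<Sum>v\<in>C. - fscale (c v) v)"
      unfolding u_def using dis by (intro sum.cong) (auto simp: fun_eq_iff)
    also have "\<dots> = - x" unfolding c by (simp add: sum_negf)
    finally show ?thesis .
  qed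
  finally have z: "(\<Sum>v\<in>A \<union> C. fscale (u v) v) = 0" by (simp add: zero_fun_def)
  have "\<forall>v\<in>A. a v = 0"
  proof
    fix v assume "v \<in> A"
    then have "u v = 0" using FS.independentD[OF ind fin subset_refl z] by auto
    then show "a v = 0" using \<open>v \<in> A\<close> by (simp add: u_def)
  qed
  then show ?thesis unfolding a by (simp add: fun_eq_iff)
qed

lemma rank_nullity:
  fixes f :: "(nat set \<Rightarrow> 'k::field) \<Rightarrow> (nat set \<Rightarrow> 'k)"
  assumes lin: "Vector_Spaces.linear (fscale::'k\<Rightarrow>_) fscale f"
    and S: "FS.subspace S" and W: "S \<subseteq> FS.span W" "finite W"
  shows "FS.dim S = FS.dim (f ` S) + FS.dim {x\<in>S. f x = 0}"
proof -
  interpret L: Vector_Spaces.linear "fscale::'k\<Rightarrow>_" fscale f by (rule lin)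
  let ?N = "{x\<in>S. f x = 0}"
  obtain BN where BN: "BN \<subseteq> ?N" "FS.independent BN" "?N \<subseteq> FS.span BN" "card BN = FS.dim ?N"
    by (rule FS.basis_exists)
  have "BN \<subseteq> S" using BN by auto
  then obtain B where B: "BN \<subseteq> B" "B \<subseteq> S" "FS.independent B" "S \<subseteq> FS.span B"
    using FS.maximal_independent_subset_extend[OF \<open>BN \<subseteq> S\<close> BN(2)] by blast
  have finB: "finite B" using FS.independent_span_bound[OF W(2) B(3)] B(2) W(1) by auto
  have cardB: "card B = FS.dim S" by (rule FS.basis_card_eq_dim[OF B(2) B(4) B(3)])
  define C where "C = B - BN"
  have "C \<subseteq> S" using B(2) unfolding C_def by blast
  then have spanC: "FS.span C \<subseteq> S" using S FS.span_minimal by blast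
  have inj: "inj_on f (FS.span C)"
  proof -
    have "\<forall>x\<in>FS.span C. f x = 0 \<longrightarrow> x = 0"
    proof (intro ballI impI)
      fix x assume xc: "x \<in> FS.span C" and fx: "f x = 0"
      then have "x \<in> FS.span BN" using spanC BN(3) by auto
      moreover have "BN \<union> C = B" using B(1) C_def by auto
      ultimately show "x = 0" using span_disjoint_indep[of BN C x] xc B(3) finB C_def by auto
    qed
    then show ?thesis using L.inj_on_iff_eq_0[OF FS.subspace_span, of C] by simp
  qed
  have indC: "FS.independent (f ` C)"
  proof -
    have "FS.independent C" using B(3) FS.independent_mono unfolding C_def by blast
    then show ?thesis using L.independent_injective_image[OF _ inj] by simp
  qed
  have injC: "inj_on f C" using inj_on_subset[OF inj FS.span_superset] .
  have fS: "f ` S \<subseteq> FS.span (f ` C)"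
  proof
    fix y assume "y \<in> f ` S"
    then obtain x where x: "x \<in> S" "y = f x" by auto
    then have "y \<in> f ` FS.span B" using B(4) by auto
    then have "y \<in> FS.span (f ` B)" using L.span_image by auto
    moreover have "f ` B \<subseteq> insert 0 (f ` C)" using BN(1) C_def by auto
    ultimately show "y \<in> FS.span (f ` C)"
      using FS.span_mono[of "f ` B" "insert 0 (f ` C)"] by auto
  qed
  have "FS.dim (f ` S) = card (f ` C)"
  proof -
    have "f ` C \<subseteq> f ` S" using spanC FS.span_superset by blast
    then show ?thesis using FS.basis_card_eq_dim[of "f ` C" "f ` S", OF _ fS indC] by simp
  qed
  also have "\<dots> = card C" using card_image[OF injC] .
  also have "\<dots> = card B - card BN" unfolding C_def using B(1) finB by (simp add: card_Diff_subset finite_subset)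
  finally have "FS.dim (f ` S) = card B - card BN" .
  moreover have "card BN \<le> card B" using B(1) finB card_mono by blast
  ultimately show ?thesis using cardB BN(4) by simp
qed

lemma key_dim:
  fixes f :: "(nat set \<Rightarrow> 'k::field) \<Rightarrow> (nat set \<Rightarrow> 'k)"
  assumes lin: "Vector_Spaces.linear (fscale::'k\<Rightarrow>_) fscale f"
    and Z: "FS.subspace Z" and B: "FS.subspace B" and BZ: "B \<subseteq> Z"
    and W: "Z \<subseteq> FS.span W" "finite W"
    and fZ: "f ` Z = Z'" and fB: "f ` B = B'"
    and ker: "\<And>z. z \<in> Z \<Longrightarrow> f z = 0 \<Longrightarrow> z \<in> B"
  shows "FS.dim Z - FS.dim B = FS.dim Z' - FS.dim B'"
proof -
  have k: "{x\<in>Z. f x = 0} = {x\<in>B. f x = 0}" using BZ ker by auto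
  have d1: "FS.dim Z = FS.dim Z' + FS.dim {x\<in>B. f x = 0}" using rank_nullity[OF lin Z W] k fZ by simp
  have d2: "FS.dim B = FS.dim B' + FS.dim {x\<in>B. f x = 0}"
    using rank_nullity[OF lin B _ W(2)] BZ W(1) fB by blast
  show ?thesis unfolding d1 d2 by simp
qed

lemma sum_fun_apply: "(sum f A) x = (\<Sum>a\<in>A. f a x)"
  by (induction A rule: infinite_finite_induct) auto

definition sg :: "nat \<Rightarrow> nat set \<Rightarrow> 'k::field" where
  "sg v \<tau> = (-1) ^ card {u\<in>\<tau>. u < v}"

lemma sg_sq: "sg v \<tau> * sg v \<tau> = (1::'k::field)"
  by (simp add: sg_def power_mult_distrib[symmetric])

lemma card_less_insert:
  assumes "finite \<tau>" "w \<notin> \<tau>" "w \<noteq> v"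
  shows "card {u\<in>insert w \<tau>. u < v} = card {u\<in>\<tau>. u < v} + (if w < v then 1 else 0)"
proof (cases "w < v")
  case True
  then have "{u\<in>insert w \<tau>. u < v} = insert w {u\<in>\<tau>. u < v}" by auto
  then show ?thesis using assms True by simp
next
  case False
  then have "{u\<in>insert w \<tau>. u < v} = {u\<in>\<tau>. u < v}" by auto
  then show ?thesis using False by simp
qed

lemma sg_insert:
  assumes "finite \<tau>" "w \<notin> \<tau>" "w \<noteq> v"
  shows "sg v (insert w \<tau>) = (sg v \<tau> :: 'k::field) * (if w < v then -1 else 1)"
  using card_less_insert[OF assms] by (simp add: sg_def)

lemma sg_swap:
  assumes "finite \<tau>" "w \<notin> \<tau>" "v \<notin> \<tau>" "w \<noteq> v"
  shows "(sg w (insert v \<tau>) :: 'k::field) * sg v \<tau> = - ((sg v (insert w \<tau>) :: 'k) * sg w \<tau>)"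
proof -
  have a: "(sg v (insert w \<tau>) :: 'k) = sg v \<tau> * (if w < v then -1 else 1)"
    by (rule sg_insert[OF assms(1,2,4)])
  have b: "(sg w (insert v \<tau>) :: 'k) = sg w \<tau> * (if v < w then -1 else 1)"
    using sg_insert[OF assms(1,3)] assms(4) by metis
  show ?thesis unfolding a b using assms(4) by (cases "w < v") (auto simp: algebra_simps)
qed

lemma faces_iff: "\<sigma> \<in> faces K p \<longleftrightarrow> \<sigma> \<in> K \<and> finite \<sigma> \<and> int (card \<sigma>) = p + 1"
  by (simp add: faces_def)

lemma bd_eq: "bd K p c \<tau> = (if \<tau> \<in> faces K (p - 1)
   then (\<Sum>v\<in>{v. v \<notin> \<tau> \<and> insert v \<tau> \<in> faces K p}. sg v \<tau> * c (insert v \<tau>)) else 0)"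
  by (simp add: bd_def sg_def)

lemma chainsD: "c \<in> chains K p \<Longrightarrow> c \<sigma> \<noteq> 0 \<Longrightarrow> \<sigma> \<in> faces K p"
  by (simp add: chains_def)

lemma chainsI: "(\<And>\<sigma>. c \<sigma> \<noteq> 0 \<Longrightarrow> \<sigma> \<in> faces K p) \<Longrightarrow> c \<in> chains K p"
  by (auto simp add: chains_def)

lemma bd_chains: "bd K p c \<in> chains K (p - 1)"
  by (rule chainsI) (simp add: bd_eq split: if_splits)

lemma bd_add: "bd K p (c + d) = bd K p c + bd K p d"
  by (simp add: fun_eq_iff bd_eq sum.distrib distrib_left)

lemma bd_scale: "bd K p (fscale a c) = fscale a (bd K p c)"
  by (simp add: fun_eq_iff bd_eq sum_distrib_left algebra_simps)

lemma bd_linear: "Vector_Spaces.linear (fscale::'k::field\<Rightarrow>_) fscale (bd K p)"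
  unfolding Vector_Spaces.linear_iff by (intro conjI vector_space_fscale allI bd_add bd_scale)

lemma bd_zero: "bd K p 0 = 0"
  by (simp add: fun_eq_iff bd_eq)

lemma bd_diff: "bd K p (c - d) = bd K p c - bd K p d"
  by (simp add: fun_eq_iff bd_eq sum_subtractf right_diff_distrib)

lemma bd_cong: "(\<And>\<sigma>. \<sigma> \<in> faces K p \<Longrightarrow> c \<sigma> = d \<sigma>) \<Longrightarrow> bd K p c = bd K p d"
  by (simp add: fun_eq_iff bd_eq)

lemma add_nz: "(a::'a::comm_monoid_add) + b \<noteq> 0 \<Longrightarrow> a \<noteq> 0 \<or> b \<noteq> 0"
  by auto

lemma chains_subspace: "FS.subspace (chains K p)"
  unfolding FS.subspace_def chains_def by (auto dest!: add_nz)

lemma cycles_subspace: "FS.subspace (cycles K p)"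
  unfolding FS.subspace_def cycles_def chains_def by (auto simp: bd_add bd_scale bd_zero dest!: add_nz)

lemma boundaries_subspace: "FS.subspace (boundaries K p)"
proof -
  interpret L: Vector_Spaces.linear "fscale::'a::field\<Rightarrow>_" fscale "bd K (p+1)" by (rule bd_linear)
  show ?thesis unfolding boundaries_def by (rule L.subspace_image[OF chains_subspace])
qed

lemma finite_faces: "finite K \<Longrightarrow> finite (faces K p)"
  by (simp add: faces_def)

definition delta :: "nat set \<Rightarrow> nat set \<Rightarrow> 'k::field" where
  "delta \<sigma> = (\<lambda>x. if x = \<sigma> then 1 else 0)"

lemma chains_span:
  assumes "finite K"
  shows "chains K p \<subseteq> FS.span ((delta :: _ \<Rightarrow> _ \<Rightarrow> 'k::field) ` faces K p)"
proof
  fix c :: "nat set \<Rightarrow> 'k" assume c: "c \<in> chains K p"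
  have "c = (\<Sum>\<sigma>\<in>faces K p. fscale (c \<sigma>) (delta \<sigma>))"
  proof
    fix x
    have "(\<Sum>\<sigma>\<in>faces K p. fscale (c \<sigma>) (delta \<sigma>)) x = (\<Sum>\<sigma>\<in>faces K p. c \<sigma> * delta \<sigma> x)"
      by (simp add: sum_fun_apply)
    also have "\<dots> = (if x \<in> faces K p then c x else 0)"
      by (simp add: delta_def finite_faces[OF assms] if_distrib cong: if_cong)
    also have "\<dots> = c x" using chainsD[OF c, of x] by auto
    finally show "c x = (\<Sum>\<sigma>\<in>faces K p. fscale (c \<sigma>) (delta \<sigma>)) x" by simp
  qed
  also have "\<dots> \<in> FS.span (delta ` faces K p)"
    by (intro FS.span_sum FS.span_scale FS.span_base) auto
  finally show "c \<in> FS.span (delta ` faces K p)" .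
qed

lemma boundaries_subset_chains: "boundaries K p \<subseteq> chains K p"
  unfolding boundaries_def using bd_chains[of K "p+1"] by auto

lemma cycles_subset_chains: "cycles K p \<subseteq> chains K p"
  unfolding cycles_def by auto

definition convex_fam :: "nat set set \<Rightarrow> bool" where
  "convex_fam F \<longleftrightarrow> (\<forall>\<rho> \<sigma> \<tau>. \<rho> \<in> F \<longrightarrow> \<sigma> \<in> F \<longrightarrow> \<rho> \<subseteq> \<tau> \<longrightarrow> \<tau> \<subseteq> \<sigma> \<longrightarrow> \<tau> \<in> F)"

definition wf_fam :: "nat set set \<Rightarrow> bool" where
  "wf_fam F \<longleftrightarrow> finite F \<and> (\<forall>\<sigma>\<in>F. finite \<sigma>)"

lemma wf_fam_Union: "wf_fam F \<Longrightarrow> finite (\<Union>F)"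
  by (simp add: wf_fam_def)

lemma sum_antisym_pairs:
  fixes T :: "nat \<Rightarrow> nat \<Rightarrow> 'k::field"
  assumes fin: "finite P" and sym: "\<And>w v. (w, v) \<in> P \<Longrightarrow> (v, w) \<in> P"
    and neq: "\<And>w v. (w, v) \<in> P \<Longrightarrow> w \<noteq> v"
    and anti: "\<And>w v. (w, v) \<in> P \<Longrightarrow> T v w = - T w v"
  shows "(\<Sum>(w, v)\<in>P. T w v) = 0"
proof -
  define P1 where "P1 = {x\<in>P. fst x < snd x}"
  define P2 where "P2 = {x\<in>P. snd x < fst x}"
  have PU: "P = P1 \<union> P2" unfolding P1_def P2_def using neq by (auto simp: less_linear) (metis linorder_neqE_nat)
  have dis: "P1 \<inter> P2 = {}" unfolding P1_def P2_def by auto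
  have fin1: "finite P1" "finite P2" unfolding P1_def P2_def using fin by auto
  have img: "P2 = prod.swap ` P1"
  proof
    show "P2 \<subseteq> prod.swap ` P1"
    proof
      fix x assume "x \<in> P2"
      then obtain w v where x: "x = (w, v)" "(w, v) \<in> P" "v < w" unfolding P2_def by (cases x) auto
      then have "(v, w) \<in> P1" unfolding P1_def using sym by auto
      then show "x \<in> prod.swap ` P1" using x by (auto intro: image_eqI[of _ _ "(v,w)"])
    qed
    show "prod.swap ` P1 \<subseteq> P2" unfolding P1_def P2_def using sym by auto
  qed
  have "(\<Sum>(w, v)\<in>P2. T w v) = (\<Sum>x\<in>P1. (\<lambda>(w, v). T w v) (prod.swap x))"
    unfolding img by (subst sum.reindex) (auto simp: inj_on_def comp_def)
  also have "\<dots> = (\<Sum>(w, v)\<in>P1. - T w v)"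
    by (rule sum.cong) (auto simp: P1_def anti)
  also have "\<dots> = - (\<Sum>(w, v)\<in>P1. T w v)"
    by (simp add: sum_negf case_prod_unfold)
  finally have e: "(\<Sum>(w, v)\<in>P2. T w v) = - (\<Sum>(w, v)\<in>P1. T w v)" .
  have "(\<Sum>(w, v)\<in>P. T w v) = (\<Sum>(w, v)\<in>P1. T w v) + (\<Sum>(w, v)\<in>P2. T w v)"
    unfolding PU by (rule sum.union_disjoint[OF fin1 dis])
  then show ?thesis using e by simp
qed

lemma bd_bd:
  assumes wf: "wf_fam F" and cv: "convex_fam F"
  shows "bd F (p - 1) (bd F p c) = (0 :: nat set \<Rightarrow> 'k::field)"
proof
  fix \<rho>
  show "bd F (p - 1) (bd F p c) \<rho> = (0 :: nat set \<Rightarrow> 'k) \<rho>"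
  proof (cases "\<rho> \<in> faces F (p - 1 - 1)")
    case False
    then show ?thesis by (simp add: bd_eq)
  next
    case True
    then have \<rho>F: "\<rho> \<in> F" and fr: "finite \<rho>" and cr: "int (card \<rho>) = p - 1"
      by (auto simp: faces_iff)
    define W where "W = {w. w \<notin> \<rho> \<and> insert w \<rho> \<in> faces F (p - 1)}"
    define V where "V w = {v. v \<notin> insert w \<rho> \<and> insert v (insert w \<rho>) \<in> faces F p}" for w
    define T where "T w v = sg w \<rho> * (sg v (insert w \<rho>) * c (insert v (insert w \<rho>)))" for w v
    define P where "P = {(w, v). w \<notin> \<rho> \<and> v \<notin> \<rho> \<and> w \<noteq> v \<and> insert v (insert w \<rho>) \<in> F}"
    have UF: "finite (\<Union>F)" using wf_fam_Union[OF wf] .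
    have finW: "finite W"
      by (rule finite_subset[OF _ UF]) (auto simp: W_def faces_iff)
    have finV: "finite (V w)" for w
      by (rule finite_subset[OF _ UF]) (auto simp: V_def faces_iff)
    have "bd F (p - 1) (bd F p c) \<rho> = (\<Sum>w\<in>W. sg w \<rho> * bd F p c (insert w \<rho>))"
      using True by (simp add: bd_eq W_def)
    also have "\<dots> = (\<Sum>w\<in>W. \<Sum>v\<in>V w. T w v)"
    proof (rule sum.cong[OF refl])
      fix w assume "w \<in> W"
      then have "insert w \<rho> \<in> faces F (p - 1)" by (simp add: W_def)
      then show "sg w \<rho> * bd F p c (insert w \<rho>) = (\<Sum>v\<in>V w. T w v)"
        by (simp add: bd_eq V_def T_def sum_distrib_left)
    qed
    also have "\<dots> = (\<Sum>(w, v)\<in>Sigma W V. T w v)"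
      by (rule sum.Sigma[OF finW]) (use finV in auto)
    also have "Sigma W V = P"
    proof
      show "Sigma W V \<subseteq> P" by (auto simp: W_def V_def P_def faces_iff)
      show "P \<subseteq> Sigma W V"
      proof
        fix x assume "x \<in> P"
        then obtain w v where x: "x = (w, v)" "w \<notin> \<rho>" "v \<notin> \<rho>" "w \<noteq> v"
          "insert v (insert w \<rho>) \<in> F" unfolding P_def by auto
        have "insert w \<rho> \<in> F"
          using cv \<rho>F x(5) unfolding convex_fam_def by (meson subset_insertI)
        moreover have "card (insert w \<rho>) = card \<rho> + 1" using fr x(2) by simp
        moreover have "card (insert v (insert w \<rho>)) = card \<rho> + 2" using fr x(2-4) by simp
        ultimately show "x \<in> Sigma W V" using x fr cr by (auto simp: W_def V_def faces_iff)
      qed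
    qed
    also have "(\<Sum>(w, v)\<in>P. T w v) = 0"
    proof (rule sum_antisym_pairs)
      have "P \<subseteq> (\<Union>F) \<times> (\<Union>F)" unfolding P_def by auto
      then show "finite P" using UF finite_subset by blast
      show "(v, w) \<in> P" if "(w, v) \<in> P" for w v using that unfolding P_def by (auto simp: insert_commute)
      show "w \<noteq> v" if "(w, v) \<in> P" for w v using that unfolding P_def by auto
      show "T v w = - T w v" if "(w, v) \<in> P" for w v
      proof -
        have a: "w \<notin> \<rho>" "v \<notin> \<rho>" "w \<noteq> v" using that unfolding P_def by auto
        have s: "(sg w (insert v \<rho>) :: 'k) * sg v \<rho> = - ((sg v (insert w \<rho>) :: 'k) * sg w \<rho>)"
          by (rule sg_swap[OF fr a])
        have "T v w = (sg w (insert v \<rho>) * sg v \<rho>) * c (insert v (insert w \<rho>))"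
          unfolding T_def by (simp add: insert_commute algebra_simps)
        also have "\<dots> = - ((sg v (insert w \<rho>) * sg w \<rho>) * c (insert v (insert w \<rho>)))"
          unfolding s by simp
        also have "\<dots> = - T w v" unfolding T_def by (simp add: algebra_simps)
        finally show ?thesis .
      qed
    qed
    finally show ?thesis by simp
  qed
qed

definition res :: "nat set set \<Rightarrow> (nat set \<Rightarrow> 'k::zero) \<Rightarrow> nat set \<Rightarrow> 'k" where
  "res X c = (\<lambda>\<sigma>. if \<sigma> \<in> X then c \<sigma> else 0)"

lemma faces_sub: "faces A p \<subseteq> A"
  by (auto simp: faces_iff)

lemma res_chains: "c \<in> chains F p \<Longrightarrow> res B c \<in> chains B p"
  by (rule chainsI) (auto simp: res_def faces_iff split: if_splits dest: chainsD)

lemma res_id: "c \<in> chains B p \<Longrightarrow> res B c = c"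
  by (auto simp: res_def fun_eq_iff faces_iff dest: chainsD)

lemma res_out: assumes "c \<in> chains A p" "A \<inter> B = {}" shows "res B c = 0"
proof
  fix x show "res B c x = 0 x"
  proof (cases "c x = 0")
    case False
    then have "x \<in> A" using chainsD[OF assms(1)] faces_sub by blast
    then show ?thesis using assms(2) by (auto simp: res_def)
  qed (simp add: res_def)
qed

lemma res_zero_chains: "c \<in> chains F p \<Longrightarrow> res B c = 0 \<Longrightarrow> c \<in> chains (F - B) p"
  apply (rule chainsI)
  apply (drule chainsD, assumption)
  apply (auto simp: res_def fun_eq_iff faces_iff split: if_splits)
  done

lemma res_add: "res B (c + d) = res B c + res B (d :: _ \<Rightarrow> 'k::comm_monoid_add)"
  by (simp add: res_def fun_eq_iff)
lemma res_diff: "res B (c - d) = res B c - res B (d :: _ \<Rightarrow> 'k::ab_group_add)"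
  by (simp add: res_def fun_eq_iff)
lemma res_scale: "res B (fscale a c) = fscale (a::'k::field) (res B c)"
  by (simp add: res_def fun_eq_iff)
lemma res_zero[simp]: "res B 0 = (0 :: _ \<Rightarrow> 'k::comm_monoid_add)"
  by (simp add: res_def fun_eq_iff)

lemma chains_mono: "A \<subseteq> F \<Longrightarrow> chains A p \<subseteq> chains F p"
  by (auto simp: chains_def faces_iff)


lemma bd_lower:
  assumes wf: "wf_fam F" and AF: "A \<subseteq> F"
    and low: "\<And>\<sigma> \<tau>. \<sigma> \<in> A \<Longrightarrow> \<tau> \<in> F \<Longrightarrow> \<tau> \<subseteq> \<sigma> \<Longrightarrow> \<tau> \<in> A"
    and c: "c \<in> chains A p"
  shows "bd F p c = bd A p c"
proof
  fix \<tau>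
  have UF: "finite (\<Union>F)" using wf_fam_Union[OF wf] .
  define IF where "IF = {v. v \<notin> \<tau> \<and> insert v \<tau> \<in> faces F p}"
  define IA where "IA = {v. v \<notin> \<tau> \<and> insert v \<tau> \<in> faces A p}"
  have finIF: "finite IF" by (rule finite_subset[OF _ UF]) (auto simp: IF_def faces_iff)
  show "bd F p c \<tau> = bd A p c \<tau>"
  proof (cases "\<tau> \<in> faces A (p - 1)")
    case True
    then have tF: "\<tau> \<in> faces F (p - 1)" using AF by (auto simp: faces_iff)
    have sub: "IA \<subseteq> IF" using AF by (auto simp: IA_def IF_def faces_iff)
    have "bd F p c \<tau> = (\<Sum>v\<in>IF. sg v \<tau> * c (insert v \<tau>))" using tF by (simp add: bd_eq IF_def)
    also have "\<dots> = (\<Sum>v\<in>IA. sg v \<tau> * c (insert v \<tau>))"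
    proof (rule sum.mono_neutral_right[OF finIF sub], rule ballI)
      fix v assume "v \<in> IF - IA"
      then have "insert v \<tau> \<notin> faces A p" by (auto simp: IA_def IF_def)
      then have "c (insert v \<tau>) = 0" using chainsD[OF c] by blast
      then show "sg v \<tau> * c (insert v \<tau>) = 0" by simp
    qed
    also have "\<dots> = bd A p c \<tau>" using True by (simp add: bd_eq IA_def)
    finally show ?thesis .
  next
    case False
    have "bd F p c \<tau> = 0"
    proof (cases "\<tau> \<in> faces F (p - 1)")
      case True
      then have tnA: "\<tau> \<notin> A" using False by (auto simp: faces_iff)
      have "(\<Sum>v\<in>IF. sg v \<tau> * c (insert v \<tau>)) = 0"
      proof (rule sum.neutral, rule ballI)
        fix v assume "v \<in> IF"
        have "c (insert v \<tau>) = 0"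
        proof (rule ccontr)
          assume "c (insert v \<tau>) \<noteq> 0"
          then have "insert v \<tau> \<in> A" using chainsD[OF c] faces_sub by blast
          then have "\<tau> \<in> A" using low True faces_sub by blast
          then show False using tnA by simp
        qed
        then show "sg v \<tau> * c (insert v \<tau>) = 0" by simp
      qed
      then show ?thesis using True by (simp add: bd_eq IF_def)
    qed (simp add: bd_eq)
    then show ?thesis using False by (simp add: bd_eq)
  qed
qed

lemma bd_upper:
  assumes BF: "B \<subseteq> F"
    and up: "\<And>\<sigma> \<tau>. \<sigma> \<in> B \<Longrightarrow> \<tau> \<in> F \<Longrightarrow> \<sigma> \<subseteq> \<tau> \<Longrightarrow> \<tau> \<in> B"
  shows "bd B p (res B c) = res B (bd F p c)"
proof
  fix \<tau>
  show "bd B p (res B c) \<tau> = res B (bd F p c) \<tau>"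
  proof (cases "\<tau> \<in> B")
    case True
    have eqf: "\<tau> \<in> faces B (p - 1) \<longleftrightarrow> \<tau> \<in> faces F (p - 1)" using True BF by (auto simp: faces_iff)
    have eqI: "{v. v \<notin> \<tau> \<and> insert v \<tau> \<in> faces B p} = {v. v \<notin> \<tau> \<and> insert v \<tau> \<in> faces F p}"
      using BF up[OF True] by (auto simp: faces_iff)
    have upB: "\<And>v. insert v \<tau> \<in> F \<Longrightarrow> insert v \<tau> \<in> B" using up[OF True] by blast
    show ?thesis
      unfolding bd_eq eqf eqI using True upB
      by (auto simp: res_def faces_iff intro!: sum.cong)
  next
    case False
    then show ?thesis by (simp add: bd_eq res_def faces_iff)
  qed
qed

definition cone_s :: "nat set set \<Rightarrow> nat \<Rightarrow> (nat set \<Rightarrow> 'k) \<Rightarrow> nat set \<Rightarrow> 'k::field" where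
  "cone_s A x c = (\<lambda>\<sigma>. if \<sigma> \<in> A \<and> x \<in> \<sigma> then sg x (\<sigma> - {x}) * c (\<sigma> - {x}) else 0)"

lemma card_minus_int: "finite \<sigma> \<Longrightarrow> x \<in> \<sigma> \<Longrightarrow> int (card (\<sigma> - {x})) = int (card \<sigma>) - 1"
proof -
  assume a: "finite \<sigma>" "x \<in> \<sigma>"
  have "Suc (card (\<sigma> - {x})) = card \<sigma>" by (rule card_Suc_Diff1[OF a])
  then show ?thesis by linarith
qed

lemma cone_linear: "Vector_Spaces.linear (fscale::'k::field\<Rightarrow>_) fscale (cone_s A x)"
  unfolding Vector_Spaces.linear_iff
  by (intro conjI vector_space_fscale allI) (auto simp: cone_s_def fun_eq_iff algebra_simps)

lemma cone_zero: "cone_s A x 0 = (0 :: _ \<Rightarrow> 'k::field)"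
  by (simp add: cone_s_def fun_eq_iff)

lemma cone_chains:
  assumes fin: "\<And>\<sigma>. \<sigma> \<in> A \<Longrightarrow> finite \<sigma>" and c: "c \<in> chains A p"
  shows "cone_s A x c \<in> chains A (p + 1)"
proof (rule chainsI)
  fix \<sigma> assume nz: "cone_s A x c \<sigma> \<noteq> 0"
  then have \<sigma>: "\<sigma> \<in> A" "x \<in> \<sigma>" "c (\<sigma> - {x}) \<noteq> 0" by (auto simp: cone_s_def split: if_splits)
  then have "\<sigma> - {x} \<in> faces A p" using chainsD[OF c] by blast
  moreover have "int (card (\<sigma> - {x})) = int (card \<sigma>) - 1"
    by (rule card_minus_int[OF fin[OF \<sigma>(1)] \<sigma>(2)])
  ultimately show "\<sigma> \<in> faces A (p + 1)" using \<sigma> fin by (auto simp: faces_iff)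
qed

lemma sg_swap2:
  assumes "finite \<rho>" "w \<notin> \<rho>" "x \<notin> \<rho>" "w \<noteq> x"
  shows "(sg w (insert x \<rho>) :: 'k::field) * sg x (insert w \<rho>) = - (sg x \<rho> * sg w \<rho>)"
proof -
  have a: "(sg w (insert x \<rho>) :: 'k) = sg w \<rho> * (if x < w then -1 else 1)"
    using assms(4) by (intro sg_insert[OF assms(1,3)]) auto
  have b: "(sg x (insert w \<rho>) :: 'k) = sg x \<rho> * (if w < x then -1 else 1)"
    by (rule sg_insert[OF assms(1,2,4)])
  show ?thesis unfolding a b using assms(4) by (cases "w < x") (auto simp: algebra_simps)
qed

lemma cone_identity:
  assumes wf: "wf_fam A"
    and t1: "\<And>\<sigma>. \<sigma> \<in> A \<Longrightarrow> insert x \<sigma> \<in> A" and t2: "\<And>\<sigma>. \<sigma> \<in> A \<Longrightarrow> \<sigma> - {x} \<in> A"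
    and c: "c \<in> chains A p"
  shows "bd A (p + 1) (cone_s A x c) + cone_s A x (bd A p c) = (c :: _ \<Rightarrow> 'k::field)"
proof
  fix \<sigma>
  have fin: "\<And>\<sigma>. \<sigma> \<in> A \<Longrightarrow> finite \<sigma>" using wf by (simp add: wf_fam_def)
  have UF: "finite (\<Union>A)" using wf_fam_Union[OF wf] .
  let ?s = "cone_s A x"
  show "(bd A (p + 1) (?s c) + ?s (bd A p c)) \<sigma> = c \<sigma>"
  proof (cases "\<sigma> \<in> faces A p")
    case False
    have c0: "c \<sigma> = 0" using chainsD[OF c] False by blast
    have b0: "bd A (p + 1) (?s c) \<sigma> = 0" using False by (simp add: bd_eq)
    have s0: "?s (bd A p c) \<sigma> = 0"
    proof (cases "\<sigma> \<in> A \<and> x \<in> \<sigma>")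
      case True
      have "\<sigma> - {x} \<notin> faces A (p - 1)"
      proof
        assume "\<sigma> - {x} \<in> faces A (p - 1)"
        moreover have "int (card (\<sigma> - {x})) = int (card \<sigma>) - 1" using True fin by (intro card_minus_int) auto
        ultimately have "\<sigma> \<in> faces A p" using True fin by (auto simp: faces_iff)
        then show False using False by simp
      qed
      then show ?thesis by (simp add: cone_s_def bd_eq)
    qed (auto simp: cone_s_def)
    show ?thesis using c0 b0 s0 by simp
  next
    case True
    then have \<sigma>A: "\<sigma> \<in> A" and f\<sigma>: "finite \<sigma>" and c\<sigma>: "int (card \<sigma>) = p + 1"
      by (auto simp: faces_iff)
    define I where "I = {w. w \<notin> \<sigma> \<and> insert w \<sigma> \<in> faces A (p + 1)}"
    have finI: "finite I" by (rule finite_subset[OF _ UF]) (auto simp: I_def faces_iff)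
    have bdI: "bd A (p + 1) (?s c) \<sigma> = (\<Sum>w\<in>I. sg w \<sigma> * ?s c (insert w \<sigma>))"
      using True by (simp add: bd_eq I_def)
    show ?thesis
    proof (cases "x \<in> \<sigma>")
      case False
      have s0: "?s (bd A p c) \<sigma> = 0" using False by (simp add: cone_s_def)
      have xI: "x \<in> I" using False t1[OF \<sigma>A] f\<sigma> c\<sigma> by (auto simp: I_def faces_iff)
      have "(\<Sum>w\<in>I. sg w \<sigma> * ?s c (insert w \<sigma>)) = (\<Sum>w\<in>I. if w = x then c \<sigma> else 0)"
      proof (rule sum.cong[OF refl])
        fix w assume wI: "w \<in> I"
        show "sg w \<sigma> * ?s c (insert w \<sigma>) = (if w = x then c \<sigma> else 0)"
        proof (cases "w = x")
          case True
          have "insert x \<sigma> - {x} = \<sigma>" using False by auto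
          then have "?s c (insert w \<sigma>) = sg x \<sigma> * c \<sigma>"
            using True t1[OF \<sigma>A] by (simp add: cone_s_def)
          then show ?thesis using True by (simp add: sg_sq mult.assoc[symmetric])
        next
          case wx: False
          then have "x \<notin> insert w \<sigma>" using False by auto
          then show ?thesis using wx by (simp add: cone_s_def)
        qed
      qed
      also have "\<dots> = c \<sigma>" using xI finI by simp
      finally show ?thesis using bdI s0 by simp
    next
      case True
      define \<rho> where "\<rho> = \<sigma> - {x}"
      have \<sigma>\<rho>: "\<sigma> = insert x \<rho>" and x\<rho>: "x \<notin> \<rho>" using True by (auto simp: \<rho>_def)
      have \<rho>A: "\<rho> \<in> A" using t2[OF \<sigma>A] by (simp add: \<rho>_def)
      have f\<rho>: "finite \<rho>" using f\<sigma> by (simp add: \<rho>_def)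
      have c\<rho>: "int (card \<rho>) = p" using c\<sigma> \<sigma>\<rho> x\<rho> f\<rho> by simp
      have \<rho>F: "\<rho> \<in> faces A (p - 1)" using \<rho>A f\<rho> c\<rho> by (simp add: faces_iff)
      define J where "J = {w. w \<notin> \<rho> \<and> insert w \<rho> \<in> faces A p}"
      have finJ: "finite J" by (rule finite_subset[OF _ UF]) (auto simp: J_def faces_iff)
      have xJ: "x \<in> J" using x\<rho> \<sigma>\<rho> True[unfolded faces_iff] \<open>\<sigma> \<in> faces A p\<close> by (auto simp: J_def)
      have IJ: "I = J - {x}"
      proof
        show "I \<subseteq> J - {x}"
        proof
          fix w assume "w \<in> I"
          then have w: "w \<notin> \<sigma>" "insert w \<sigma> \<in> A" "int (card (insert w \<sigma>)) = p + 1 + 1"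
            by (auto simp: I_def faces_iff)
          have "insert w \<sigma> - {x} = insert w \<rho>" using w(1) \<sigma>\<rho> x\<rho> by auto
          then have "insert w \<rho> \<in> A" using t2[OF w(2)] by simp
          moreover have "card (insert w \<sigma>) = card \<rho> + 2" using w(1) \<sigma>\<rho> x\<rho> f\<rho> by auto
          moreover have "card (insert w \<rho>) = card \<rho> + 1" using w(1) \<sigma>\<rho> f\<rho> by auto
          ultimately show "w \<in> J - {x}" using w \<sigma>\<rho> f\<rho> by (auto simp: J_def faces_iff)
        qed
        show "J - {x} \<subseteq> I"
        proof
          fix w assume "w \<in> J - {x}"
          then have w: "w \<notin> \<rho>" "w \<noteq> x" "insert w \<rho> \<in> A" "int (card (insert w \<rho>)) = p + 1"
            by (auto simp: J_def faces_iff)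
          have "insert x (insert w \<rho>) = insert w \<sigma>" using \<sigma>\<rho> by auto
          then have "insert w \<sigma> \<in> A" using t1[OF w(3)] by simp
          moreover have "card (insert w \<sigma>) = card \<rho> + 2" using w \<sigma>\<rho> x\<rho> f\<rho> by auto
          moreover have "card (insert w \<rho>) = card \<rho> + 1" using w(1) f\<rho> by auto
          ultimately show "w \<in> I" using w \<sigma>\<rho> f\<rho> by (auto simp: I_def faces_iff)
        qed
      qed
      have sb: "?s (bd A p c) \<sigma> = sg x \<rho> * (\<Sum>w\<in>J. sg w \<rho> * c (insert w \<rho>))"
        using \<sigma>A True \<rho>F by (simp add: cone_s_def bd_eq J_def \<rho>_def[symmetric])
      also have "\<dots> = sg x \<rho> * (sg x \<rho> * c \<sigma>) + (\<Sum>w\<in>J - {x}. sg x \<rho> * (sg w \<rho> * c (insert w \<rho>)))"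
        by (simp add: sum.remove[OF finJ xJ] distrib_left sum_distrib_left \<sigma>\<rho>)
      also have "sg x \<rho> * (sg x \<rho> * c \<sigma>) = c \<sigma>" by (simp add: sg_sq mult.assoc[symmetric])
      finally have sb': "?s (bd A p c) \<sigma> = c \<sigma> + (\<Sum>w\<in>J - {x}. sg x \<rho> * (sg w \<rho> * c (insert w \<rho>)))" .
      have "(\<Sum>w\<in>I. sg w \<sigma> * ?s c (insert w \<sigma>)) = (\<Sum>w\<in>J - {x}. sg w \<sigma> * (sg x (insert w \<rho>) * c (insert w \<rho>)))"
      proof (rule sum.cong)
        show "I = J - {x}" by (rule IJ)
        fix w assume "w \<in> J - {x}"
        then have wI: "w \<in> I" using IJ by simp
        then have w: "w \<notin> \<sigma>" "insert w \<sigma> \<in> A" by (auto simp: I_def faces_iff)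
        have "insert w \<sigma> - {x} = insert w \<rho>" using w(1) \<sigma>\<rho> x\<rho> by auto
        then show "sg w \<sigma> * ?s c (insert w \<sigma>) = sg w \<sigma> * (sg x (insert w \<rho>) * c (insert w \<rho>))"
          using w True by (simp add: cone_s_def)
      qed
      also have "\<dots> = - (\<Sum>w\<in>J - {x}. sg x \<rho> * (sg w \<rho> * c (insert w \<rho>)))"
      proof -
        have "(\<Sum>w\<in>J - {x}. sg w \<sigma> * (sg x (insert w \<rho>) * c (insert w \<rho>)))
            = (\<Sum>w\<in>J - {x}. - (sg x \<rho> * (sg w \<rho> * c (insert w \<rho>))))"
        proof (rule sum.cong[OF refl])
          fix w assume "w \<in> J - {x}"
          then have w: "w \<notin> \<rho>" "w \<noteq> x" by (auto simp: J_def)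
          have "(sg w \<sigma> :: 'k) * sg x (insert w \<rho>) = - (sg x \<rho> * sg w \<rho>)"
            unfolding \<sigma>\<rho> by (rule sg_swap2[OF f\<rho> w(1) x\<rho> w(2)])
          then show "sg w \<sigma> * (sg x (insert w \<rho>) * c (insert w \<rho>)) = - (sg x \<rho> * (sg w \<rho> * c (insert w \<rho>)))"
            by (metis (no_types, lifting) minus_mult_left mult.assoc)
        qed
        then show ?thesis by (simp add: sum_negf)
      qed
      finally show ?thesis using bdI sb' by simp
    qed
  qed
qed

lemma cone_acyclic:
  assumes wf: "wf_fam A"
    and t1: "\<And>\<sigma>. \<sigma> \<in> A \<Longrightarrow> insert x \<sigma> \<in> A" and t2: "\<And>\<sigma>. \<sigma> \<in> A \<Longrightarrow> \<sigma> - {x} \<in> A"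
  shows "cycles A p \<subseteq> (boundaries A p :: (_ \<Rightarrow> 'k::field) set)"
proof
  fix z :: "_ \<Rightarrow> 'k" assume "z \<in> cycles A p"
  then have z: "z \<in> chains A p" "bd A p z = 0" by (auto simp: cycles_def)
  have fin: "\<And>\<sigma>. \<sigma> \<in> A \<Longrightarrow> finite \<sigma>" using wf by (simp add: wf_fam_def)
  have "bd A (p + 1) (cone_s A x z) + cone_s A x (bd A p z) = z" by (rule cone_identity[OF wf t1 t2 z(1)])
  then have "z = bd A (p + 1) (cone_s A x z)" using z(2) by (simp add: cone_zero)
  then show "z \<in> boundaries A p" unfolding boundaries_def using cone_chains[OF fin z(1)] by blast
qed

lemma rhom_eq: "rhom_dim TYPE('k::field) K p = FS.dim (cycles K p :: (_ \<Rightarrow> 'k) set) - FS.dim (boundaries K p :: (_ \<Rightarrow> 'k) set)"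
  by (simp add: rhom_dim_def)

lemma bds_sub_cycles:
  assumes wf: "wf_fam F" and cv: "convex_fam F"
  shows "boundaries F p \<subseteq> (cycles F p :: (_ \<Rightarrow> 'k::field) set)"
proof
  fix b :: "_ \<Rightarrow> 'k" assume "b \<in> boundaries F p"
  then obtain c where b: "b = bd F (p + 1) c" by (auto simp: boundaries_def)
  have "b \<in> chains F p" using bd_chains[of F "p + 1" c] b by simp
  moreover have "bd F p b = 0" using bd_bd[OF wf cv, of "p + 1" c] b by simp
  ultimately show "b \<in> cycles F p" by (simp add: cycles_def)
qed

lemma rhom_transfer:
  fixes f :: "(nat set \<Rightarrow> 'k::field) \<Rightarrow> (nat set \<Rightarrow> 'k)"
  assumes lin: "Vector_Spaces.linear (fscale::'k\<Rightarrow>_) fscale f"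
    and wf: "wf_fam F" and cv: "convex_fam F"
    and fZ: "f ` cycles F p = cycles G q" and fB: "f ` boundaries F p = boundaries G q"
    and ker: "\<And>z. z \<in> cycles F p \<Longrightarrow> f z = 0 \<Longrightarrow> z \<in> boundaries F p"
  shows "rhom_dim TYPE('k) F p = rhom_dim TYPE('k) G q"
proof -
  have finF: "finite F" using wf by (simp add: wf_fam_def)
  have W: "cycles F p \<subseteq> FS.span ((delta :: _ \<Rightarrow> _ \<Rightarrow> 'k) ` faces F p)"
    using chains_span[OF finF, of p] cycles_subset_chains by blast
  have finW: "finite ((delta :: _ \<Rightarrow> _ \<Rightarrow> 'k) ` faces F p)" using finite_faces[OF finF] by simp
  show ?thesis unfolding rhom_eq
    by (rule key_dim[OF lin cycles_subspace boundaries_subspace bds_sub_cycles[OF wf cv] W finW fZ fB ker])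
qed

lemma res_linear: "Vector_Spaces.linear (fscale::'k::field\<Rightarrow>_) fscale (res B)"
  unfolding Vector_Spaces.linear_iff
  by (intro conjI vector_space_fscale allI res_add res_scale)

lemma wf_fam_subset: "wf_fam F \<Longrightarrow> A \<subseteq> F \<Longrightarrow> wf_fam A"
  by (auto simp: wf_fam_def intro: finite_subset)

lemma split_lower:
  fixes p :: int
  assumes wf: "wf_fam F" and cv: "convex_fam F" and AF: "A \<subseteq> F"
    and low: "\<And>\<sigma> \<tau>. \<sigma> \<in> A \<Longrightarrow> \<tau> \<in> F \<Longrightarrow> \<tau> \<subseteq> \<sigma> \<Longrightarrow> \<tau> \<in> A"
    and acyc: "\<And>q. cycles A q \<subseteq> (boundaries A q :: (_ \<Rightarrow> 'k::field) set)"
  shows "rhom_dim TYPE('k) F p = rhom_dim TYPE('k) (F - A) p"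
proof -
  define B where "B = F - A"
  have BF: "B \<subseteq> F" by (auto simp: B_def)
  have up: "\<And>\<sigma> \<tau>. \<sigma> \<in> B \<Longrightarrow> \<tau> \<in> F \<Longrightarrow> \<sigma> \<subseteq> \<tau> \<Longrightarrow> \<tau> \<in> B"
    using low by (auto simp: B_def)
  have AB: "A \<inter> B = {}" by (auto simp: B_def)
  have FAB: "F - B = A" using AF by (auto simp: B_def)
  have bdlow: "\<And>q c. c \<in> chains A q \<Longrightarrow> bd F q c = (bd A q c :: _ \<Rightarrow> 'k)"
    by (rule bd_lower[OF wf AF low])
  have bdup: "\<And>q c. bd B q (res B c) = res B (bd F q c :: _ \<Rightarrow> 'k)"
    by (rule bd_upper[OF BF up])
  have chA: "\<And>q. chains A q \<subseteq> chains F q" by (rule chains_mono[OF AF])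
  have chB: "\<And>q. chains B q \<subseteq> chains F q" by (rule chains_mono[OF BF])
  have "rhom_dim TYPE('k) F p = rhom_dim TYPE('k) B p"
  proof (rule rhom_transfer[OF res_linear wf cv])
    show "res B ` cycles F p = (cycles B p :: (_ \<Rightarrow> 'k) set)"
    proof
      show "res B ` cycles F p \<subseteq> (cycles B p :: (_ \<Rightarrow> 'k) set)"
      proof
        fix y :: "_ \<Rightarrow> 'k" assume "y \<in> res B ` cycles F p"
        then obtain z where z: "z \<in> chains F p" "bd F p z = 0" "y = res B z" by (auto simp: cycles_def)
        have "y \<in> chains B p" using res_chains[OF z(1)] z(3) by simp
        moreover have "bd B p y = 0" using bdup[of p z] z by simp
        ultimately show "y \<in> cycles B p" by (simp add: cycles_def)
      qed
      show "cycles B p \<subseteq> res B ` (cycles F p :: (_ \<Rightarrow> 'k) set)"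
      proof
        fix z' :: "_ \<Rightarrow> 'k" assume "z' \<in> cycles B p"
        then have z': "z' \<in> chains B p" "bd B p z' = 0" by (auto simp: cycles_def)
        have z'F: "z' \<in> chains F p" using z' chB by blast
        define y where "y = bd F p z'"
        have resy: "res B y = 0" unfolding y_def using bdup[of p z'] res_id[OF z'(1)] z'(2) by simp
        have yA: "y \<in> chains A (p - 1)"
          using res_zero_chains[OF bd_chains[of F p z'] resy[unfolded y_def]] FAB unfolding y_def by simp
        have "bd A (p - 1) y = 0" using bdlow[OF yA] bd_bd[OF wf cv, of p z'] by (simp add: y_def)
        then have "y \<in> cycles A (p - 1)" using yA by (simp add: cycles_def)
        then have "y \<in> boundaries A (p - 1)" using acyc by blast
        then obtain a where a: "a \<in> chains A p" "y = bd A p a" by (auto simp: boundaries_def)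
        have ya: "y = bd F p a" using a bdlow by simp
        define z where "z = z' - a"
        have "z \<in> chains F p" unfolding z_def using z'F a(1) chA chains_subspace FS.subspace_diff by blast
        moreover have "bd F p z = 0" unfolding z_def bd_diff ya[symmetric] y_def by simp
        ultimately have zc: "z \<in> cycles F p" by (simp add: cycles_def)
        have "res B z = z'" unfolding z_def res_diff res_id[OF z'(1)] res_out[OF a(1) AB] by simp
        then show "z' \<in> res B ` cycles F p" using zc by force
      qed
    qed
    show "res B ` boundaries F p = (boundaries B p :: (_ \<Rightarrow> 'k) set)"
    proof
      show "res B ` boundaries F p \<subseteq> (boundaries B p :: (_ \<Rightarrow> 'k) set)"
      proof
        fix y :: "_ \<Rightarrow> 'k" assume "y \<in> res B ` boundaries F p"
        then obtain c where c: "c \<in> chains F (p + 1)" "y = res B (bd F (p + 1) c)" by (auto simp: boundaries_def)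
        have "y = bd B (p + 1) (res B c)" using c bdup by simp
        then show "y \<in> boundaries B p" using res_chains[OF c(1)] by (auto simp: boundaries_def)
      qed
      show "boundaries B p \<subseteq> res B ` (boundaries F p :: (_ \<Rightarrow> 'k) set)"
      proof
        fix y :: "_ \<Rightarrow> 'k" assume "y \<in> boundaries B p"
        then obtain c where c: "c \<in> chains B (p + 1)" "y = bd B (p + 1) c" by (auto simp: boundaries_def)
        have "y = res B (bd F (p + 1) c)" using c bdup[of "p + 1" c] res_id[OF c(1)] by simp
        moreover have "bd F (p + 1) c \<in> boundaries F p" using c(1) chB by (auto simp: boundaries_def)
        ultimately show "y \<in> res B ` boundaries F p" by blast
      qed
    qed
    show "z \<in> boundaries F p" if "z \<in> cycles F p" "res B z = (0 :: _ \<Rightarrow> 'k)" for z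
    proof -
      have z: "z \<in> chains F p" "bd F p z = 0" using that by (auto simp: cycles_def)
      have zA: "z \<in> chains A p" using res_zero_chains[OF z(1) that(2)] FAB by simp
      have "bd A p z = 0" using bdlow[OF zA] z(2) by simp
      then have "z \<in> cycles A p" using zA by (simp add: cycles_def)
      then have "z \<in> boundaries A p" using acyc by blast
      then obtain a where a: "a \<in> chains A (p + 1)" "z = bd A (p + 1) a" by (auto simp: boundaries_def)
      have "z = bd F (p + 1) a" using a bdlow by simp
      then show ?thesis using a(1) chA by (auto simp: boundaries_def)
    qed
  qed
  then show ?thesis by (simp add: B_def)
qed

lemma split_upper:
  fixes p :: int
  assumes wf: "wf_fam F" and cv: "convex_fam F" and BF: "B \<subseteq> F"
    and up: "\<And>\<sigma> \<tau>. \<sigma> \<in> B \<Longrightarrow> \<tau> \<in> F \<Longrightarrow> \<sigma> \<subseteq> \<tau> \<Longrightarrow> \<tau> \<in> B"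
    and t1: "\<And>\<sigma>. \<sigma> \<in> B \<Longrightarrow> insert x \<sigma> \<in> B" and t2: "\<And>\<sigma>. \<sigma> \<in> B \<Longrightarrow> \<sigma> - {x} \<in> B"
  shows "rhom_dim TYPE('k::field) F p = rhom_dim TYPE('k) (F - B) p"
proof -
  define A where "A = F - B"
  have AF: "A \<subseteq> F" by (auto simp: A_def)
  have low: "\<And>\<sigma> \<tau>. \<sigma> \<in> A \<Longrightarrow> \<tau> \<in> F \<Longrightarrow> \<tau> \<subseteq> \<sigma> \<Longrightarrow> \<tau> \<in> A"
    using up by (auto simp: A_def)
  have AB: "A \<inter> B = {}" by (auto simp: A_def)
  have FBA: "F - B = A" by (simp add: A_def)
  have wfB: "wf_fam B" by (rule wf_fam_subset[OF wf BF])
  have finB: "\<And>\<sigma>. \<sigma> \<in> B \<Longrightarrow> finite \<sigma>" using wfB by (simp add: wf_fam_def)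
  define s :: "(nat set \<Rightarrow> 'k) \<Rightarrow> _" where "s = cone_s B x"
  have slin: "Vector_Spaces.linear (fscale::'k\<Rightarrow>_) fscale s" unfolding s_def by (rule cone_linear)
  have s0: "s 0 = 0" unfolding s_def by (rule cone_zero)
  have sch: "\<And>q c. c \<in> chains B q \<Longrightarrow> s c \<in> chains B (q + 1)"
    unfolding s_def by (rule cone_chains[OF finB])
  have sid: "\<And>q c. c \<in> chains B q \<Longrightarrow> bd B (q + 1) (s c) + s (bd B q c) = c"
    unfolding s_def by (rule cone_identity[OF wfB t1 t2])
  have bdlow: "\<And>q c. c \<in> chains A q \<Longrightarrow> bd F q c = (bd A q c :: _ \<Rightarrow> 'k)"
    by (rule bd_lower[OF wf AF low])
  have bdup: "\<And>q c. bd B q (res B c) = res B (bd F q c :: _ \<Rightarrow> 'k)"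
    by (rule bd_upper[OF BF up])
  have chA: "\<And>q. chains A q \<subseteq> chains F q" by (rule chains_mono[OF AF])
  have chB: "\<And>q. chains B q \<subseteq> chains F q" by (rule chains_mono[OF BF])
  have bdF_ch: "\<And>q c. bd F (q + 1) c \<in> (chains F q :: (_ \<Rightarrow> 'k) set)"
    using bd_chains by (metis add_diff_cancel_right')
  have dd: "\<And>q c. bd F q (bd F (q + 1) c) = (0 :: _ \<Rightarrow> 'k)"
    using bd_bd[OF wf cv] by (metis add_diff_cancel_right')
  define r where "r z = z - bd F (p + 1) (s (res B z))" for z :: "_ \<Rightarrow> 'k"
  have rlin: "Vector_Spaces.linear (fscale::'k\<Rightarrow>_) fscale r"
  proof -
    interpret L1: Vector_Spaces.linear "fscale::'k\<Rightarrow>_" fscale s by (rule slin)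
    interpret L2: Vector_Spaces.linear "fscale::'k\<Rightarrow>_" fscale "res B" by (rule res_linear)
    show ?thesis unfolding Vector_Spaces.linear_iff r_def
      apply (intro conjI vector_space_fscale allI)
       apply (simp add: L1.add L2.add bd_add fun_eq_iff)
      apply (simp add: L1.scale L2.scale bd_scale fun_eq_iff right_diff_distrib)
      done
  qed
  have rcyc: "r z \<in> cycles A p" if "z \<in> cycles F p" for z
  proof -
    have z: "z \<in> chains F p" "bd F p z = 0" using that by (auto simp: cycles_def)
    define y where "y = res B z"
    have yB: "y \<in> chains B p" unfolding y_def by (rule res_chains[OF z(1)])
    have "bd B p y = 0" unfolding y_def using bdup[of p z] z(2) by simp
    then have ysy: "bd B (p + 1) (s y) = y" using sid[OF yB] s0 by simp
    have rch: "r z \<in> chains F p"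
      unfolding r_def using z(1) bdF_ch chains_subspace FS.subspace_diff by blast
    have "res B (r z) = y - res B (bd F (p + 1) (s y))" unfolding r_def res_diff y_def by simp
    also have "res B (bd F (p + 1) (s y)) = bd B (p + 1) (s y)"
      using bdup[of "p + 1" "s y"] res_id[OF sch[OF yB]] by simp
    finally have "res B (r z) = 0" using ysy by (simp add: zero_fun_def)
    then have rA: "r z \<in> chains A p" using res_zero_chains[OF rch, of B] FBA by simp
    have "bd A p (r z) = bd F p (r z)" using bdlow[OF rA] by simp
    also have "\<dots> = 0" unfolding r_def bd_diff z(2) dd by simp
    finally show ?thesis using rA by (simp add: cycles_def)
  qed
  have rid: "r z = z" if "z \<in> chains A p" for z
    unfolding r_def using res_out[OF that AB] s0 bd_zero by simp
  have "rhom_dim TYPE('k) F p = rhom_dim TYPE('k) A p"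
  proof (rule rhom_transfer[OF rlin wf cv])
    show "r ` cycles F p = cycles A p"
    proof
      show "r ` cycles F p \<subseteq> cycles A p" using rcyc by blast
      show "cycles A p \<subseteq> r ` cycles F p"
      proof
        fix z :: "_ \<Rightarrow> 'k" assume zc: "z \<in> cycles A p"
        then have z: "z \<in> chains A p" "bd A p z = 0" by (auto simp: cycles_def)
        have "z \<in> cycles F p" using z bdlow[OF z(1)] chA by (auto simp: cycles_def)
        then show "z \<in> r ` cycles F p" using rid[OF z(1)] by force
      qed
    qed
    show "r ` boundaries F p = boundaries A p"
    proof
      show "r ` boundaries F p \<subseteq> boundaries A p"
      proof
        fix y :: "_ \<Rightarrow> 'k" assume "y \<in> r ` boundaries F p"
        then obtain c where c: "c \<in> chains F (p + 1)" "y = r (bd F (p + 1) c)"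
          by (auto simp: boundaries_def)
        define b where "b = bd F (p + 1) c"
        have bc: "b \<in> cycles F p" unfolding b_def using bdF_ch dd by (simp add: cycles_def)
        have yA: "y \<in> chains A p" using rcyc[OF bc] c(2) by (simp add: cycles_def b_def)
        define c1 where "c1 = c - s (res B b)"
        have c1F: "c1 \<in> chains F (p + 1)" unfolding c1_def
          using c(1) sch[OF res_chains[of b F p]] bc chB chains_subspace FS.subspace_diff cycles_def
          by (metis (no_types, lifting) mem_Collect_eq subsetD)
        have yc1: "y = bd F (p + 1) c1" unfolding c1_def bd_diff c(2) r_def b_def by simp
        define y1 where "y1 = res B c1"
        have y1B: "y1 \<in> chains B (p + 1)" unfolding y1_def by (rule res_chains[OF c1F])
        have "bd B (p + 1) y1 = res B y" unfolding y1_def bdup yc1 by simp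
        also have "\<dots> = 0" by (rule res_out[OF yA AB])
        finally have "bd B (p + 1 + 1) (s y1) = y1" using sid[OF y1B] s0 by simp
        define c2 where "c2 = c1 - bd F (p + 1 + 1) (s y1)"
        have c2F: "c2 \<in> chains F (p + 1)" unfolding c2_def
          using c1F bdF_ch chains_subspace FS.subspace_diff by blast
        have "res B c2 = y1 - res B (bd F (p + 1 + 1) (s y1))" unfolding c2_def res_diff y1_def by simp
        also have "res B (bd F (p + 1 + 1) (s y1)) = bd B (p + 1 + 1) (s y1)"
          using bdup[of "p + 1 + 1" "s y1"] res_id[OF sch[OF y1B]] by simp
        finally have "res B c2 = 0" using \<open>bd B (p + 1 + 1) (s y1) = y1\<close> by (simp add: zero_fun_def)
        then have c2A: "c2 \<in> chains A (p + 1)" using res_zero_chains[OF c2F, of B] FBA by simp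
        have "bd F (p + 1) c2 = y" unfolding c2_def bd_diff dd yc1 by simp
        then have "y = bd A (p + 1) c2" using bdlow[OF c2A] by simp
        then show "y \<in> boundaries A p" using c2A by (auto simp: boundaries_def)
      qed
      show "boundaries A p \<subseteq> r ` boundaries F p"
      proof
        fix y :: "_ \<Rightarrow> 'k" assume "y \<in> boundaries A p"
        then obtain a where a: "a \<in> chains A (p + 1)" "y = bd A (p + 1) a" by (auto simp: boundaries_def)
        have yF: "y = bd F (p + 1) a" using bdlow[OF a(1)] a(2) by simp
        have "y \<in> chains A p" using bd_chains[of A "p + 1" a] a(2) by simp
        then have "r y = y" by (rule rid)
        moreover have "y \<in> boundaries F p" using yF a(1) chA by (auto simp: boundaries_def)
        ultimately show "y \<in> r ` boundaries F p" by force
      qed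
    qed
    show "z \<in> boundaries F p" if "z \<in> cycles F p" "r z = 0" for z :: "_ \<Rightarrow> 'k"
    proof -
      have zc: "z \<in> chains F p" using that by (auto simp: cycles_def)
      have "z = bd F (p + 1) (s (res B z))" using that(2) unfolding r_def by simp
      moreover have "s (res B z) \<in> chains F (p + 1)" using sch[OF res_chains[OF zc]] chB by blast
      ultimately show ?thesis by (auto simp: boundaries_def)
    qed
  qed
  then show ?thesis by (simp add: A_def)
qed

locale shiftloc =
  fixes G :: "nat set set" and X :: "nat set"
  assumes finX: "finite X" and finG: "\<And>\<gamma>. \<gamma> \<in> G \<Longrightarrow> finite \<gamma>"
    and less: "\<And>\<gamma> u v. \<gamma> \<in> G \<Longrightarrow> u \<in> \<gamma> \<Longrightarrow> v \<in> X \<Longrightarrow> u < v"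
begin

abbreviation "F' \<equiv> (\<lambda>\<gamma>. \<gamma> \<union> X) ` G"

definition g :: "(nat set \<Rightarrow> 'k::field) \<Rightarrow> nat set \<Rightarrow> 'k" where
  "g c = (\<lambda>\<sigma>. if \<sigma> \<in> G then c (\<sigma> \<union> X) else 0)"

definition h :: "(nat set \<Rightarrow> 'k::field) \<Rightarrow> nat set \<Rightarrow> 'k" where
  "h c = (\<lambda>\<tau>. if \<tau> \<in> F' then c (\<tau> - X) else 0)"

lemma disj: "\<gamma> \<in> G \<Longrightarrow> \<gamma> \<inter> X = {}"
  using less by fastforce

lemma unX: "\<gamma> \<in> G \<Longrightarrow> (\<gamma> \<union> X) - X = \<gamma>"
  using disj by blast

lemma card_un: "\<gamma> \<in> G \<Longrightarrow> card (\<gamma> \<union> X) = card \<gamma> + card X"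
  using disj finG finX by (simp add: card_Un_disjoint)

lemma F'_iff: "\<tau> \<in> F' \<longleftrightarrow> \<tau> - X \<in> G \<and> X \<subseteq> \<tau>"
proof
  assume "\<tau> \<in> F'"
  then obtain \<gamma> where "\<gamma> \<in> G" "\<tau> = \<gamma> \<union> X" by auto
  then show "\<tau> - X \<in> G \<and> X \<subseteq> \<tau>" using unX by auto
next
  assume a: "\<tau> - X \<in> G \<and> X \<subseteq> \<tau>"
  then have "\<tau> = (\<tau> - X) \<union> X" by auto
  then show "\<tau> \<in> F'" using a by blast
qed

lemma g_linear: "Vector_Spaces.linear (fscale::'k::field\<Rightarrow>_) fscale g"
  unfolding Vector_Spaces.linear_iff
  by (intro conjI vector_space_fscale allI) (auto simp: g_def fun_eq_iff)

lemma g_chains: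
  assumes c: "c \<in> chains F' p"
  shows "g c \<in> chains G (p - int (card X))"
proof (rule chainsI)
  fix \<sigma> assume "g c \<sigma> \<noteq> 0"
  then have \<sigma>: "\<sigma> \<in> G" "c (\<sigma> \<union> X) \<noteq> 0" by (auto simp: g_def split: if_splits)
  then have "\<sigma> \<union> X \<in> faces F' p" using chainsD[OF c] by blast
  then show "\<sigma> \<in> faces G (p - int (card X))" using \<sigma>(1) card_un[OF \<sigma>(1)] finG[OF \<sigma>(1)]
    by (auto simp: faces_iff)
qed

lemma h_chains:
  assumes c: "c \<in> chains G (p - int (card X))"
  shows "h c \<in> chains F' p"
proof (rule chainsI)
  fix \<tau> assume "h c \<tau> \<noteq> 0"
  then have \<tau>: "\<tau> \<in> F'" "c (\<tau> - X) \<noteq> 0" by (auto simp: h_def split: if_splits)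
  then obtain \<gamma> where \<gamma>: "\<gamma> \<in> G" "\<tau> = \<gamma> \<union> X" by auto
  have "\<tau> - X = \<gamma>" using unX[OF \<gamma>(1)] \<gamma>(2) by simp
  then have "c \<gamma> \<noteq> 0" using \<tau>(2) by simp
  then have "\<gamma> \<in> faces G (p - int (card X))" by (rule chainsD[OF c])
  then have cg: "int (card \<gamma>) = p - int (card X) + 1" by (simp add: faces_iff)
  have ct: "card \<tau> = card \<gamma> + card X" unfolding \<gamma>(2) by (rule card_un[OF \<gamma>(1)])
  have "finite \<tau>" unfolding \<gamma>(2) using finG[OF \<gamma>(1)] finX by simp
  moreover have "int (card \<tau>) = int (card \<gamma>) + int (card X)" unfolding ct by simp
  then have "int (card \<tau>) = p + 1" using cg by linarith
  ultimately show "\<tau> \<in> faces F' p" using \<tau>(1) by (simp add: faces_iff)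
qed

lemma gh: assumes c: "c \<in> chains G q" shows "g (h c) = c"
proof
  fix \<sigma> show "g (h c) \<sigma> = c \<sigma>"
  proof (cases "\<sigma> \<in> G")
    case True
    then have "\<sigma> \<union> X \<in> F'" by blast
    then show ?thesis using True unX[OF True] by (simp add: g_def h_def)
  next
    case False
    then have "c \<sigma> = 0" using chainsD[OF c] faces_sub by blast
    then show ?thesis using False by (simp add: g_def)
  qed
qed

lemma g_inj: assumes c: "c \<in> chains F' p" and g0: "g c = 0" shows "c = 0"
proof
  fix \<tau> show "c \<tau> = 0 \<tau>"
  proof (cases "c \<tau> = 0")
    case True then show ?thesis by simp
  next
    case False
    then have "\<tau> \<in> faces F' p" by (rule chainsD[OF c])
    then have "\<tau> \<in> F'" by (simp add: faces_iff)
    then obtain \<gamma> where \<gamma>: "\<gamma> \<in> G" "\<tau> = \<gamma> \<union> X" by blast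
    have "g c \<gamma> = c \<tau>" unfolding g_def \<gamma>(2) using \<gamma>(1) by simp
    moreover have "g c \<gamma> = 0" using g0 by simp
    ultimately show ?thesis using False by simp
  qed
qed

lemma sg_unX:
  assumes "\<gamma> \<in> G" "insert v \<gamma> \<in> G"
  shows "sg v (\<gamma> \<union> X) = sg v \<gamma>"
proof -
  have "{u\<in>\<gamma> \<union> X. u < v} = {u\<in>\<gamma>. u < v}"
    using less[OF assms(2), of v] by fastforce
  then show ?thesis by (simp add: sg_def)
qed

lemma bd_g: "bd G (p - int (card X)) (g c) = g (bd F' p (c :: _ \<Rightarrow> 'k::field))"
proof
  fix \<sigma>
  show "bd G (p - int (card X)) (g c) \<sigma> = g (bd F' p c) \<sigma>"
  proof (cases "\<sigma> \<in> G")
    case False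
    have "\<sigma> \<notin> faces G (p - int (card X) - 1)" using False faces_sub by blast
    then show ?thesis using False by (simp add: bd_eq g_def)
  next
    case True
    have f\<sigma>: "finite \<sigma>" by (rule finG[OF True])
    have cu: "int (card (\<sigma> \<union> X)) = int (card \<sigma>) + int (card X)" using card_un[OF True] by simp
    have mem: "\<sigma> \<union> X \<in> F'" using True by blast
    have fin: "finite (\<sigma> \<union> X)" using f\<sigma> finX by simp
    have fe: "\<sigma> \<in> faces G (p - int (card X) - 1) \<longleftrightarrow> \<sigma> \<union> X \<in> faces F' (p - 1)"
      unfolding faces_iff using True mem fin f\<sigma> cu by auto
    have IE: "{v. v \<notin> \<sigma> \<and> insert v \<sigma> \<in> faces G (p - int (card X))}
            = {v. v \<notin> \<sigma> \<union> X \<and> insert v (\<sigma> \<union> X) \<in> faces F' p}"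
    proof (intro Collect_cong iffI)
      fix v assume v: "v \<notin> \<sigma> \<and> insert v \<sigma> \<in> faces G (p - int (card X))"
      then have vG: "insert v \<sigma> \<in> G" and cv: "int (card (insert v \<sigma>)) = p - int (card X) + 1"
        unfolding faces_iff by blast+
      have vX: "v \<notin> X" using less[OF vG, of v] by blast
      have eq: "insert v (\<sigma> \<union> X) = insert v \<sigma> \<union> X" by blast
      have m: "insert v \<sigma> \<union> X \<in> F'" using vG by blast
      have c2: "int (card (insert v \<sigma> \<union> X)) = int (card (insert v \<sigma>)) + int (card X)"
        using card_un[OF vG] by simp
      have f2: "finite (insert v \<sigma> \<union> X)" using finG[OF vG] finX by simp
      have "insert v \<sigma> \<union> X \<in> faces F' p" unfolding faces_iff using m c2 f2 cv by simp
      then show "v \<notin> \<sigma> \<union> X \<and> insert v (\<sigma> \<union> X) \<in> faces F' p"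
        using v vX unfolding eq by blast
    next
      fix v assume v: "v \<notin> \<sigma> \<union> X \<and> insert v (\<sigma> \<union> X) \<in> faces F' p"
      then have m: "insert v (\<sigma> \<union> X) \<in> F'" and cv: "int (card (insert v (\<sigma> \<union> X))) = p + 1"
        unfolding faces_iff by blast+
      then obtain \<gamma> where \<gamma>: "\<gamma> \<in> G" "insert v (\<sigma> \<union> X) = \<gamma> \<union> X" by blast
      have "\<gamma> = (\<gamma> \<union> X) - X" by (simp add: unX[OF \<gamma>(1)])
      also have "\<dots> = insert v (\<sigma> \<union> X) - X" by (simp only: \<gamma>(2))
      also have "\<dots> = insert v \<sigma>" using v disj[OF True] by blast
      finally have g\<gamma>: "\<gamma> = insert v \<sigma>" .
      have c2: "int (card (\<gamma> \<union> X)) = int (card \<gamma>) + int (card X)"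
        using card_un[OF \<gamma>(1)] by simp
      have "insert v \<sigma> \<in> faces G (p - int (card X))"
        unfolding faces_iff g\<gamma>[symmetric] using \<gamma>(1) finG[OF \<gamma>(1)] c2 cv \<gamma>(2) by simp
      then show "v \<notin> \<sigma> \<and> insert v \<sigma> \<in> faces G (p - int (card X))" using v by blast
    qed
    have "bd G (p - int (card X)) (g c) \<sigma>
        = (if \<sigma> \<union> X \<in> faces F' (p - 1) then
            (\<Sum>v\<in>{v. v \<notin> \<sigma> \<union> X \<and> insert v (\<sigma> \<union> X) \<in> faces F' p}. sg v \<sigma> * g c (insert v \<sigma>)) else 0)"
      by (simp only: bd_eq fe IE)
    also have "\<dots> = (if \<sigma> \<union> X \<in> faces F' (p - 1) then
            (\<Sum>v\<in>{v. v \<notin> \<sigma> \<union> X \<and> insert v (\<sigma> \<union> X) \<in> faces F' p}. sg v (\<sigma> \<union> X) * c (insert v (\<sigma> \<union> X))) else 0)"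
    proof (rule if_cong[OF refl _ refl], rule sum.cong[OF refl])
      fix v assume "v \<in> {v. v \<notin> \<sigma> \<union> X \<and> insert v (\<sigma> \<union> X) \<in> faces F' p}"
      then have "v \<in> {v. v \<notin> \<sigma> \<and> insert v \<sigma> \<in> faces G (p - int (card X))}" by (simp only: IE)
      then have vG: "insert v \<sigma> \<in> G" by (simp add: faces_iff)
      have eq: "insert v (\<sigma> \<union> X) = insert v \<sigma> \<union> X" by blast
      have "g c (insert v \<sigma>) = c (insert v (\<sigma> \<union> X))" unfolding g_def eq using vG by simp
      then show "sg v \<sigma> * g c (insert v \<sigma>) = sg v (\<sigma> \<union> X) * c (insert v (\<sigma> \<union> X))"
        by (simp add: sg_unX[OF True vG])
    qed
    also have "\<dots> = g (bd F' p c) \<sigma>" using True by (simp add: g_def bd_eq)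
    finally show ?thesis .
  qed
qed

lemma shift_rhom:
  assumes wf: "wf_fam F'" and cv: "convex_fam F'"
  shows "rhom_dim TYPE('k::field) F' p = rhom_dim TYPE('k) G (p - int (card X))"
proof (rule rhom_transfer[OF g_linear wf cv])
  let ?q = "p - int (card X)"
  show "g ` cycles F' p = (cycles G ?q :: (_ \<Rightarrow> 'k) set)"
  proof
    show "g ` cycles F' p \<subseteq> (cycles G ?q :: (_ \<Rightarrow> 'k) set)"
    proof
      fix y :: "_ \<Rightarrow> 'k" assume "y \<in> g ` cycles F' p"
      then obtain z where z: "z \<in> chains F' p" "bd F' p z = 0" "y = g z" by (auto simp: cycles_def)
      have "y \<in> chains G ?q" using g_chains[OF z(1)] z(3) by simp
      moreover have "bd G ?q y = 0" using bd_g[of p z] z by (simp add: g_def zero_fun_def)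
      ultimately show "y \<in> cycles G ?q" by (simp add: cycles_def)
    qed
    show "cycles G ?q \<subseteq> g ` (cycles F' p :: (_ \<Rightarrow> 'k) set)"
    proof
      fix z :: "_ \<Rightarrow> 'k" assume "z \<in> cycles G ?q"
      then have z: "z \<in> chains G ?q" "bd G ?q z = 0" by (auto simp: cycles_def)
      have hz: "h z \<in> chains F' p" by (rule h_chains[OF z(1)])
      have "g (bd F' p (h z)) = 0" using bd_g[of p "h z"] gh[OF z(1)] z(2) by simp
      then have "bd F' p (h z) = 0" using g_inj[OF bd_chains] by blast
      then have "h z \<in> cycles F' p" using hz by (simp add: cycles_def)
      then show "z \<in> g ` cycles F' p" using gh[OF z(1)] by force
    qed
  qed
  show "g ` boundaries F' p = (boundaries G ?q :: (_ \<Rightarrow> 'k) set)"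
  proof
    show "g ` boundaries F' p \<subseteq> (boundaries G ?q :: (_ \<Rightarrow> 'k) set)"
    proof
      fix y :: "_ \<Rightarrow> 'k" assume "y \<in> g ` boundaries F' p"
      then obtain c where c: "c \<in> chains F' (p + 1)" "y = g (bd F' (p + 1) c)" by (auto simp: boundaries_def)
      have "y = bd G (?q + 1) (g c)" using bd_g[of "p + 1" c] c(2) by (simp add: algebra_simps)
      moreover have "g c \<in> chains G (?q + 1)" using g_chains[OF c(1)] by (simp add: algebra_simps)
      ultimately show "y \<in> boundaries G ?q" by (auto simp: boundaries_def)
    qed
    show "boundaries G ?q \<subseteq> g ` (boundaries F' p :: (_ \<Rightarrow> 'k) set)"
    proof
      fix y :: "_ \<Rightarrow> 'k" assume "y \<in> boundaries G ?q"
      then obtain c where c: "c \<in> chains G (?q + 1)" "y = bd G (?q + 1) c" by (auto simp: boundaries_def)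
      have c': "c \<in> chains G (p + 1 - int (card X))" using c(1) by (simp add: algebra_simps)
      have "y = g (bd F' (p + 1) (h c))" using bd_g[of "p + 1" "h c"] gh[OF c(1)] c(2) by (simp add: algebra_simps)
      moreover have "h c \<in> chains F' (p + 1)" by (rule h_chains[OF c'])
      ultimately show "y \<in> g ` boundaries F' p" by (auto simp: boundaries_def)
    qed
  qed
  show "z \<in> boundaries F' p" if "z \<in> cycles F' p" "g z = (0 :: _ \<Rightarrow> 'k)" for z
  proof -
    have "z = 0" using g_inj that by (auto simp: cycles_def)
    moreover have "(0 :: _ \<Rightarrow> 'k) \<in> boundaries F' p"
      using bd_zero[of F' "p + 1"] chains_subspace[of F' "p+1"] FS.subspace_0 by (force simp: boundaries_def)
    ultimately show ?thesis by simp
  qed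
qed

end

definition gap :: "nat \<Rightarrow> nat \<Rightarrow> nat set \<Rightarrow> bool" where
  "gap t k \<rho> \<longleftrightarrow> (\<exists>i. 1 \<le> i \<and> i + t \<le> k + 1 \<and> (\<forall>j. i \<le> j \<longrightarrow> j < i + t \<longrightarrow> j \<notin> \<rho>))"

lemma gapI: "1 \<le> i \<Longrightarrow> i + t \<le> k + 1 \<Longrightarrow> (\<And>j. i \<le> j \<Longrightarrow> j < i + t \<Longrightarrow> j \<notin> \<rho>) \<Longrightarrow> gap t k \<rho>"
  unfolding gap_def by blast

lemma gapE: "gap t k \<rho> \<Longrightarrow> (\<And>i. 1 \<le> i \<Longrightarrow> i + t \<le> k + 1 \<Longrightarrow> (\<forall>j. i \<le> j \<longrightarrow> j < i + t \<longrightarrow> j \<notin> \<rho>) \<Longrightarrow> P) \<Longrightarrow> P"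
  unfolding gap_def by blast

lemma gap_anti: "gap t k A \<Longrightarrow> B \<subseteq> A \<Longrightarrow> gap t k B"
  unfolding gap_def by blast

definition Om :: "nat \<Rightarrow> nat \<Rightarrow> nat set set" where
  "Om t m = {\<sigma>. \<sigma> \<subseteq> {1..m} \<and> gap t m \<sigma>}"

definition Uk :: "nat \<Rightarrow> nat \<Rightarrow> nat set set" where
  "Uk t k = {\<sigma>. k + 1 \<in> \<sigma> \<and> \<sigma> \<subseteq> {1..k+1} \<and> \<not> gap t k (\<sigma> - {k+1})}"

lemma Omega_eq:
  assumes "1 \<le> t" "t \<le> m"
  shows "Omega m t = Om t m"
proof (intro set_eqI iffI)
  fix \<sigma> assume "\<sigma> \<in> Omega m t"
  then obtain i where i: "i \<in> {1..m - t + 1}" "\<sigma> \<subseteq> {1..m} - {i..i + t - 1}"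
    unfolding Omega_def by blast
  have "gap t m \<sigma>"
  proof (rule gapI[of i])
    show "1 \<le> i" using i(1) by simp
    have "i \<le> m - t + 1" using i(1) by simp
    then show "i + t \<le> m + 1" using assms by arith
    fix j assume "i \<le> j" "j < i + t"
    then have "j \<in> {i..i + t - 1}" by simp
    then show "j \<notin> \<sigma>" using i(2) by blast
  qed
  then show "\<sigma> \<in> Om t m" using i(2) by (auto simp: Om_def)
next
  fix \<sigma> assume "\<sigma> \<in> Om t m"
  then have s: "\<sigma> \<subseteq> {1..m}" "gap t m \<sigma>" by (auto simp: Om_def)
  obtain i where i: "1 \<le> i" "i + t \<le> m + 1" "\<forall>j. i \<le> j \<longrightarrow> j < i + t \<longrightarrow> j \<notin> \<sigma>"
    using gapE[OF s(2)] by blast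
  have "i \<in> {1..m - t + 1}" using i assms by simp
  moreover have "\<sigma> \<subseteq> {1..m} - {i..i + t - 1}"
  proof
    fix j assume j: "j \<in> \<sigma>"
    have "j \<notin> {i..i + t - 1}"
    proof
      assume "j \<in> {i..i + t - 1}"
      then have "i \<le> j" "j < i + t" using assms by auto
      then show False using i(3) j by blast
    qed
    then show "j \<in> {1..m} - {i..i + t - 1}" using s(1) j by blast
  qed
  ultimately show "\<sigma> \<in> Omega m t" unfolding Omega_def by blast
qed

lemma Om_down: assumes "\<sigma> \<in> Om t m" "\<tau> \<subseteq> \<sigma>" shows "\<tau> \<in> Om t m"
proof -
  have s: "\<sigma> \<subseteq> {1..m}" "gap t m \<sigma>" using assms(1) by (simp_all add: Om_def)
  have "\<tau> \<subseteq> {1..m}" by (rule subset_trans[OF assms(2) s(1)])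
  moreover have "gap t m \<tau>" by (rule gap_anti[OF s(2) assms(2)])
  ultimately show ?thesis by (simp add: Om_def)
qed

lemma Om_wf: "wf_fam (Om t m)"
proof -
  have sub: "Om t m \<subseteq> Pow {1..m}" by (auto simp: Om_def)
  have "finite (Om t m)" by (rule finite_subset[OF sub]) simp
  moreover have "\<forall>\<sigma>\<in>Om t m. finite \<sigma>"
  proof
    fix \<sigma> assume "\<sigma> \<in> Om t m"
    then have "\<sigma> \<subseteq> {1..m}" by (simp add: Om_def)
    then show "finite \<sigma>" by (rule finite_subset) simp
  qed
  ultimately show ?thesis unfolding wf_fam_def by blast
qed

lemma Om_convex: "convex_fam (Om t m)"
  unfolding convex_fam_def
proof (intro allI impI)
  fix \<rho> \<sigma> \<tau> assume "\<rho> \<in> Om t m" "\<sigma> \<in> Om t m" "\<rho> \<subseteq> \<tau>" "\<tau> \<subseteq> \<sigma>"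
  then show "\<tau> \<in> Om t m" using Om_down by metis
qed

lemma Uk_wf: "wf_fam (Uk t k)"
proof -
  have sub: "Uk t k \<subseteq> Pow {1..k+1}" by (auto simp: Uk_def)
  have "finite (Uk t k)" by (rule finite_subset[OF sub]) simp
  moreover have "\<forall>\<sigma>\<in>Uk t k. finite \<sigma>"
  proof
    fix \<sigma> assume "\<sigma> \<in> Uk t k"
    then have "\<sigma> \<subseteq> {1..k+1}" by (simp add: Uk_def)
    then show "finite \<sigma>" by (rule finite_subset) simp
  qed
  ultimately show ?thesis unfolding wf_fam_def by blast
qed

lemma Uk_convex: "convex_fam (Uk t k)"
  unfolding convex_fam_def
proof (intro allI impI)
  fix \<rho> \<sigma> \<tau> assume a: "\<rho> \<in> Uk t k" "\<sigma> \<in> Uk t k" "\<rho> \<subseteq> \<tau>" "\<tau> \<subseteq> \<sigma>"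
  have r: "k + 1 \<in> \<rho>" "\<not> gap t k (\<rho> - {k+1})" using a(1) by (simp_all add: Uk_def)
  have s: "\<sigma> \<subseteq> {1..k+1}" using a(2) by (simp add: Uk_def)
  have "k + 1 \<in> \<tau>" using a(3) r(1) by (rule subsetD)
  moreover have "\<tau> \<subseteq> {1..k+1}" by (rule subset_trans[OF a(4) s])
  moreover have "\<not> gap t k (\<tau> - {k+1})"
  proof
    assume "gap t k (\<tau> - {k+1})"
    moreover have "\<rho> - {k+1} \<subseteq> \<tau> - {k+1}" using a(3) by (rule Diff_mono) simp
    ultimately have "gap t k (\<rho> - {k+1})" by (rule gap_anti)
    then show False using r(2) by simp
  qed
  ultimately show "\<tau> \<in> Uk t k" by (simp add: Uk_def)
qed

lemma step1_set:
  assumes t: "1 \<le> t" and m: "m = k + t + 1"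
  shows "Om t m - {\<sigma> \<in> Om t m. insert m \<sigma> \<in> Om t m} = Uk t k"
proof (intro set_eqI iffI)
  fix \<sigma> assume "\<sigma> \<in> Om t m - {\<sigma> \<in> Om t m. insert m \<sigma> \<in> Om t m}"
  then have s1: "\<sigma> \<subseteq> {1..m}" "gap t m \<sigma>" and nin: "insert m \<sigma> \<notin> Om t m"
    by (auto simp: Om_def)
  have "insert m \<sigma> \<subseteq> {1..m}" using s1(1) m by auto
  then have ng: "\<not> gap t m (insert m \<sigma>)" using nin by (simp add: Om_def)
  obtain i where i: "1 \<le> i" "i + t \<le> m + 1" and av: "\<forall>j. i \<le> j \<longrightarrow> j < i + t \<longrightarrow> j \<notin> \<sigma>"
    using gapE[OF s1(2)] by blast
  have ige: "k + 2 \<le> i"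
  proof (rule ccontr)
    assume "\<not> k + 2 \<le> i"
    then have ik: "i + t \<le> m" using m by simp
    have "gap t m (insert m \<sigma>)"
    proof (rule gapI[OF i])
      fix j assume "i \<le> j" "j < i + t"
      then show "j \<notin> insert m \<sigma>" using av ik by auto
    qed
    then show False using ng by simp
  qed
  have a: "\<And>j. k + 2 \<le> j \<Longrightarrow> j \<le> m \<Longrightarrow> j \<notin> \<sigma>"
  proof -
    fix j assume "k + 2 \<le> j" "j \<le> m"
    moreover have "i = k + 2" using ige i(2) m by simp
    ultimately show "j \<notin> \<sigma>" using av m by simp
  qed
  have b: "k + 1 \<in> \<sigma>"
  proof (rule ccontr)
    assume nk: "k + 1 \<notin> \<sigma>"
    have "gap t m (insert m \<sigma>)"
    proof (rule gapI[of "k + 1"])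
      show "1 \<le> k + 1" by simp
      show "k + 1 + t \<le> m + 1" using m by simp
      fix j assume j: "k + 1 \<le> j" "j < k + 1 + t"
      have "j \<noteq> m" using j m by simp
      moreover have "j \<notin> \<sigma>"
      proof (cases "j = k + 1")
        case True then show ?thesis using nk by simp
      next
        case False then show ?thesis using a j m by simp
      qed
      ultimately show "j \<notin> insert m \<sigma>" by simp
    qed
    then show False using ng by simp
  qed
  have c: "\<sigma> \<subseteq> {1..k+1}"
  proof
    fix j assume j: "j \<in> \<sigma>"
    then have "1 \<le> j" "j \<le> m" using s1(1) by auto
    moreover have "\<not> k + 2 \<le> j" using a j \<open>j \<le> m\<close> by blast
    ultimately show "j \<in> {1..k+1}" by simp
  qed
  have d: "\<not> gap t k (\<sigma> - {k+1})"
  proof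
    assume "gap t k (\<sigma> - {k+1})"
    then obtain i' where i': "1 \<le> i'" "i' + t \<le> k + 1" and av': "\<forall>j. i' \<le> j \<longrightarrow> j < i' + t \<longrightarrow> j \<notin> \<sigma> - {k+1}"
      by (rule gapE) blast
    have "gap t m (insert m \<sigma>)"
    proof (rule gapI[of i'])
      show "1 \<le> i'" by (rule i'(1))
      show "i' + t \<le> m + 1" using i'(2) m by simp
      fix j assume j: "i' \<le> j" "j < i' + t"
      then have "j \<noteq> k + 1" "j \<noteq> m" using i'(2) m by auto
      then show "j \<notin> insert m \<sigma>" using av' j by auto
    qed
    then show False using ng by simp
  qed
  show "\<sigma> \<in> Uk t k" using b c d by (simp add: Uk_def)
next
  fix \<sigma> assume "\<sigma> \<in> Uk t k"
  then have b: "k + 1 \<in> \<sigma>" and c: "\<sigma> \<subseteq> {1..k+1}" and d: "\<not> gap t k (\<sigma> - {k+1})"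
    by (simp_all add: Uk_def)
  have s1: "\<sigma> \<subseteq> {1..m}" using c m by auto
  have s2: "gap t m \<sigma>"
  proof (rule gapI[of "k + 2"])
    show "1 \<le> k + 2" by simp
    show "k + 2 + t \<le> m + 1" using m by simp
    fix j assume "k + 2 \<le> j" "j < k + 2 + t"
    then show "j \<notin> \<sigma>" using c by auto
  qed
  have ng: "\<not> gap t m (insert m \<sigma>)"
  proof
    assume "gap t m (insert m \<sigma>)"
    then obtain i where i: "1 \<le> i" "i + t \<le> m + 1" and av: "\<forall>j. i \<le> j \<longrightarrow> j < i + t \<longrightarrow> j \<notin> insert m \<sigma>"
      by (rule gapE) blast
    have "i \<le> m" using i(2) t by simp
    then have "\<not> m < i + t" using av by auto
    then have "i \<le> k + 1" using m by simp
    then have "\<not> k + 1 < i + t" using av b by auto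
    then have ik: "i + t \<le> k + 1" by simp
    have "gap t k (\<sigma> - {k+1})"
    proof (rule gapI[OF i(1) ik])
      fix j assume "i \<le> j" "j < i + t"
      then show "j \<notin> \<sigma> - {k+1}" using av by auto
    qed
    then show False using d by simp
  qed
  have "\<sigma> \<in> Om t m" using s1 s2 by (simp add: Om_def)
  moreover have "insert m \<sigma> \<notin> Om t m" using ng by (simp add: Om_def)
  ultimately show "\<sigma> \<in> Om t m - {\<sigma> \<in> Om t m. insert m \<sigma> \<in> Om t m}" by simp
qed

lemma step1:
  assumes t: "1 \<le> t"
  shows "rhom_dim TYPE('k::field) (Om t (k + t + 1)) p = rhom_dim TYPE('k) (Uk t k) p"
proof -
  define m where "m = k + t + 1"
  define F where "F = Om t m"
  define S where "S = {\<sigma> \<in> F. insert m \<sigma> \<in> F}"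
  have SF: "S \<subseteq> F" by (auto simp: S_def)
  have low: "\<And>\<sigma> \<tau>. \<sigma> \<in> S \<Longrightarrow> \<tau> \<in> F \<Longrightarrow> \<tau> \<subseteq> \<sigma> \<Longrightarrow> \<tau> \<in> S"
  proof -
    fix \<sigma> \<tau> assume a: "\<sigma> \<in> S" "\<tau> \<in> F" "\<tau> \<subseteq> \<sigma>"
    have "insert m \<tau> \<subseteq> insert m \<sigma>" using a(3) by blast
    then have "insert m \<tau> \<in> F" using a(1) Om_down unfolding S_def F_def by blast
    then show "\<tau> \<in> S" using a(2) by (simp add: S_def)
  qed
  have wfS: "wf_fam S" by (rule wf_fam_subset[OF _ SF]) (simp add: F_def Om_wf)
  have t1: "\<And>\<sigma>. \<sigma> \<in> S \<Longrightarrow> insert m \<sigma> \<in> S" by (simp add: S_def)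
  have t2: "\<And>\<sigma>. \<sigma> \<in> S \<Longrightarrow> \<sigma> - {m} \<in> S"
  proof -
    fix \<sigma> assume a: "\<sigma> \<in> S"
    have "\<sigma> - {m} \<in> F" using a Om_down[of \<sigma> t m "\<sigma> - {m}"] by (auto simp: S_def F_def)
    moreover have "insert m (\<sigma> - {m}) \<in> F"
      using a Om_down[of "insert m \<sigma>" t m "insert m (\<sigma> - {m})"] by (auto simp: S_def F_def)
    ultimately show "\<sigma> - {m} \<in> S" by (simp add: S_def)
  qed
  have acyc: "\<And>q. cycles S q \<subseteq> (boundaries S q :: (_ \<Rightarrow> 'k) set)"
    by (rule cone_acyclic[OF wfS t1 t2])
  have "rhom_dim TYPE('k) F p = rhom_dim TYPE('k) (F - S) p"
    by (rule split_lower[OF _ _ SF low acyc]) (simp_all add: F_def Om_wf Om_convex)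
  moreover have "F - S = Uk t k" unfolding F_def S_def by (rule step1_set[OF t m_def])
  ultimately show ?thesis by (simp add: F_def m_def)
qed

lemma convex_diff_upper:
  assumes cv: "convex_fam F" and up: "\<And>\<sigma> \<tau>. \<sigma> \<in> B \<Longrightarrow> \<tau> \<in> F \<Longrightarrow> \<sigma> \<subseteq> \<tau> \<Longrightarrow> \<tau> \<in> B"
  shows "convex_fam (F - B)"
  unfolding convex_fam_def
proof (intro allI impI)
  fix \<rho> \<sigma> \<tau> assume a: "\<rho> \<in> F - B" "\<sigma> \<in> F - B" "\<rho> \<subseteq> \<tau>" "\<tau> \<subseteq> \<sigma>"
  have "\<tau> \<in> F" using cv a unfolding convex_fam_def by blast
  moreover have "\<tau> \<notin> B" using up a by blast
  ultimately show "\<tau> \<in> F - B" by simp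
qed

lemma Uk_iff: "\<sigma> \<in> Uk t k \<longleftrightarrow> k + 1 \<in> \<sigma> \<and> \<sigma> \<subseteq> {1..k+1} \<and> \<not> gap t k (\<sigma> - {k+1})"
  by (simp add: Uk_def)

lemma step2_common:
  assumes k: "1 \<le> k"
  shows "rhom_dim TYPE('k::field) (Uk t k) p
       = rhom_dim TYPE('k) (Uk t k - {\<sigma> \<in> Uk t k. \<sigma> - {k} \<in> Uk t k}) p"
proof -
  define F where "F = Uk t k"
  define B where "B = {\<sigma> \<in> F. \<sigma> - {k} \<in> F}"
  have BF: "B \<subseteq> F" by (auto simp: B_def)
  have up: "\<And>\<sigma> \<tau>. \<sigma> \<in> B \<Longrightarrow> \<tau> \<in> F \<Longrightarrow> \<sigma> \<subseteq> \<tau> \<Longrightarrow> \<tau> \<in> B"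
  proof -
    fix \<sigma> \<tau> assume a: "\<sigma> \<in> B" "\<tau> \<in> F" "\<sigma> \<subseteq> \<tau>"
    have s: "\<not> gap t k (\<sigma> - {k} - {k+1})" using a(1) by (simp add: B_def F_def Uk_iff)
    have tt: "k + 1 \<in> \<tau>" "\<tau> \<subseteq> {1..k+1}" using a(2) by (simp_all add: F_def Uk_iff)
    have "\<not> gap t k (\<tau> - {k} - {k+1})"
    proof
      assume "gap t k (\<tau> - {k} - {k+1})"
      moreover have "\<sigma> - {k} - {k+1} \<subseteq> \<tau> - {k} - {k+1}" using a(3) by blast
      ultimately have "gap t k (\<sigma> - {k} - {k+1})" by (rule gap_anti)
      then show False using s by simp
    qed
    moreover have "k + 1 \<in> \<tau> - {k}" using tt by simp
    moreover have "\<tau> - {k} \<subseteq> {1..k+1}" using tt by blast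
    ultimately have "\<tau> - {k} \<in> F" by (simp add: F_def Uk_iff)
    then show "\<tau> \<in> B" using a(2) by (simp add: B_def)
  qed
  have t1: "\<And>\<sigma>. \<sigma> \<in> B \<Longrightarrow> insert k \<sigma> \<in> B"
  proof -
    fix \<sigma> assume a: "\<sigma> \<in> B"
    have s: "k + 1 \<in> \<sigma>" "\<sigma> \<subseteq> {1..k+1}" "\<not> gap t k (\<sigma> - {k+1})" "\<sigma> - {k} \<in> F"
      using a by (simp_all add: B_def F_def Uk_iff)
    have "\<not> gap t k (insert k \<sigma> - {k+1})"
    proof
      assume "gap t k (insert k \<sigma> - {k+1})"
      moreover have "\<sigma> - {k+1} \<subseteq> insert k \<sigma> - {k+1}" by blast
      ultimately have "gap t k (\<sigma> - {k+1})" by (rule gap_anti)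
      then show False using s by simp
    qed
    moreover have "insert k \<sigma> \<subseteq> {1..k+1}" using s(2) k by simp
    ultimately have "insert k \<sigma> \<in> F" using s(1) by (simp add: F_def Uk_iff)
    moreover have "insert k \<sigma> - {k} = \<sigma> - {k}" by blast
    ultimately show "insert k \<sigma> \<in> B" using s(4) by (simp add: B_def)
  qed
  have t2: "\<And>\<sigma>. \<sigma> \<in> B \<Longrightarrow> \<sigma> - {k} \<in> B"
    by (simp add: B_def)
  have wfF: "wf_fam F" by (simp add: F_def Uk_wf)
  have cvF: "convex_fam F" by (simp add: F_def Uk_convex)
  show ?thesis using split_upper[OF wfF cvF BF up t1 t2] by (simp add: F_def B_def)
qed

lemma S2_up:
  assumes a: "\<sigma> \<in> {\<sigma> \<in> Uk t k. \<sigma> - {k} \<in> Uk t k}" "\<tau> \<in> Uk t k" "\<sigma> \<subseteq> \<tau>"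
  shows "\<tau> \<in> {\<sigma> \<in> Uk t k. \<sigma> - {k} \<in> Uk t k}"
proof -
  have s: "\<not> gap t k (\<sigma> - {k} - {k+1})" using a(1) by (simp add: Uk_iff)
  have tt: "k + 1 \<in> \<tau>" "\<tau> \<subseteq> {1..k+1}" using a(2) by (simp_all add: Uk_iff)
  have "\<not> gap t k (\<tau> - {k} - {k+1})"
  proof
    assume "gap t k (\<tau> - {k} - {k+1})"
    moreover have "\<sigma> - {k} - {k+1} \<subseteq> \<tau> - {k} - {k+1}" using a(3) by blast
    ultimately have "gap t k (\<sigma> - {k} - {k+1})" by (rule gap_anti)
    then show False using s by simp
  qed
  moreover have "k + 1 \<in> \<tau> - {k}" using tt by simp
  moreover have "\<tau> - {k} \<subseteq> {1..k+1}" using tt by blast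
  ultimately have "\<tau> - {k} \<in> Uk t k" by (simp add: Uk_iff)
  then show ?thesis using a(2) by simp
qed

lemma F'_props:
  "wf_fam (Uk t k - {\<sigma> \<in> Uk t k. \<sigma> - {k} \<in> Uk t k})"
  "convex_fam (Uk t k - {\<sigma> \<in> Uk t k. \<sigma> - {k} \<in> Uk t k})"
proof -
  show "wf_fam (Uk t k - {\<sigma> \<in> Uk t k. \<sigma> - {k} \<in> Uk t k})"
    by (rule wf_fam_subset[OF Uk_wf]) blast
  show "convex_fam (Uk t k - {\<sigma> \<in> Uk t k. \<sigma> - {k} \<in> Uk t k})"
    by (rule convex_diff_upper[OF Uk_convex]) (rule S2_up)
qed

lemma step2b_set:
  assumes t: "1 \<le> t" and k: "k = k' + t + 1"
  shows "Uk t k - {\<sigma> \<in> Uk t k. \<sigma> - {k} \<in> Uk t k} = (\<lambda>\<gamma>. \<gamma> \<union> {k, k+1}) ` Uk t k'"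
proof (intro set_eqI iffI)
  fix \<sigma> assume "\<sigma> \<in> Uk t k - {\<sigma> \<in> Uk t k. \<sigma> - {k} \<in> Uk t k}"
  then have mem: "\<sigma> \<in> Uk t k" and nB: "\<sigma> - {k} \<notin> Uk t k" by blast+
  then have A: "k + 1 \<in> \<sigma>" "\<sigma> \<subseteq> {1..k+1}" "\<not> gap t k (\<sigma> - {k+1})"
    by (simp_all add: Uk_iff)
  have "k + 1 \<in> \<sigma> - {k}" "\<sigma> - {k} \<subseteq> {1..k+1}" using A by auto
  then have g: "gap t k (\<sigma> - {k} - {k+1})" using nB by (simp add: Uk_iff)
  then obtain i where i: "1 \<le> i" "i + t \<le> k + 1" and av: "\<forall>j. i \<le> j \<longrightarrow> j < i + t \<longrightarrow> j \<notin> \<sigma> - {k} - {k+1}"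
    by (rule gapE) blast
  have k\<sigma>: "k \<in> \<sigma>"
  proof (rule ccontr)
    assume nk: "k \<notin> \<sigma>"
    have "gap t k (\<sigma> - {k+1})"
    proof (rule gapI[OF i])
      fix j assume "i \<le> j" "j < i + t"
      then show "j \<notin> \<sigma> - {k+1}" using av nk by auto
    qed
    then show False using A(3) by simp
  qed
  have ik: "i + t = k + 1"
  proof (rule ccontr)
    assume "i + t \<noteq> k + 1"
    then have lt: "i + t \<le> k" using i(2) by simp
    have "gap t k (\<sigma> - {k+1})"
    proof (rule gapI[OF i])
      fix j assume "i \<le> j" "j < i + t"
      then show "j \<notin> \<sigma> - {k+1}" using av lt by auto
    qed
    then show False using A(3) by simp
  qed
  have mid: "\<And>j. k' + 2 \<le> j \<Longrightarrow> j < k \<Longrightarrow> j \<notin> \<sigma>"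
  proof -
    fix j assume j: "k' + 2 \<le> j" "j < k"
    have "i = k' + 2" using ik k by simp
    then show "j \<notin> \<sigma>" using av j ik by auto
  qed
  have k'1: "k' + 1 \<in> \<sigma>"
  proof (rule ccontr)
    assume nk: "k' + 1 \<notin> \<sigma>"
    have "gap t k (\<sigma> - {k+1})"
    proof (rule gapI[of "k' + 1"])
      show "1 \<le> k' + 1" by simp
      show "k' + 1 + t \<le> k + 1" using k by simp
      fix j assume j: "k' + 1 \<le> j" "j < k' + 1 + t"
      show "j \<notin> \<sigma> - {k+1}"
      proof (cases "j = k' + 1")
        case True then show ?thesis using nk by simp
      next
        case False then show ?thesis using mid[of j] j k by simp
      qed
    qed
    then show False using A(3) by simp
  qed
  define \<gamma> where "\<gamma> = \<sigma> - {k, k+1}"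
  have "\<sigma> = \<gamma> \<union> {k, k+1}" using A(1) k\<sigma> by (auto simp: \<gamma>_def)
  moreover have "\<gamma> \<in> Uk t k'"
  proof -
    have "k' + 1 \<in> \<gamma>" using k'1 k t by (simp add: \<gamma>_def)
    moreover have "\<gamma> \<subseteq> {1..k'+1}"
    proof
      fix j assume j: "j \<in> \<gamma>"
      then have "j \<in> \<sigma>" "j \<noteq> k" "j \<noteq> k + 1" by (auto simp: \<gamma>_def)
      then have "1 \<le> j" "j \<le> k + 1" "j \<noteq> k" "j \<noteq> k + 1" "\<not> (k' + 2 \<le> j \<and> j < k)"
        using A(2) mid by auto
      then show "j \<in> {1..k'+1}" using k by auto
    qed
    moreover have "\<not> gap t k' (\<gamma> - {k'+1})"
    proof
      assume "gap t k' (\<gamma> - {k'+1})"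
      then obtain i' where i': "1 \<le> i'" "i' + t \<le> k' + 1" and av': "\<forall>j. i' \<le> j \<longrightarrow> j < i' + t \<longrightarrow> j \<notin> \<gamma> - {k'+1}"
        by (rule gapE) blast
      have "gap t k (\<sigma> - {k+1})"
      proof (rule gapI[of i'])
        show "1 \<le> i'" by (rule i'(1))
        show "i' + t \<le> k + 1" using i'(2) k by simp
        fix j assume j: "i' \<le> j" "j < i' + t"
        then have "j \<noteq> k' + 1" "j \<noteq> k" "j \<noteq> k + 1" using i'(2) k by auto
        then show "j \<notin> \<sigma> - {k+1}" using av' j by (auto simp: \<gamma>_def)
      qed
      then show False using A(3) by simp
    qed
    ultimately show ?thesis by (simp add: Uk_iff)
  qed
  ultimately show "\<sigma> \<in> (\<lambda>\<gamma>. \<gamma> \<union> {k, k+1}) ` Uk t k'" by blast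
next
  fix \<sigma> assume "\<sigma> \<in> (\<lambda>\<gamma>. \<gamma> \<union> {k, k+1}) ` Uk t k'"
  then obtain \<gamma> where \<sigma>: "\<sigma> = \<gamma> \<union> {k, k+1}" and "\<gamma> \<in> Uk t k'" by blast
  then have g1: "k' + 1 \<in> \<gamma>" and g2: "\<gamma> \<subseteq> {1..k'+1}" and g3: "\<not> gap t k' (\<gamma> - {k'+1})"
    by (simp_all add: Uk_iff)
  have s1: "k + 1 \<in> \<sigma>" using \<sigma> by simp
  have s2: "\<sigma> \<subseteq> {1..k+1}" using \<sigma> g2 k by auto
  have s3: "\<not> gap t k (\<sigma> - {k+1})"
  proof
    assume "gap t k (\<sigma> - {k+1})"
    then obtain i where i: "1 \<le> i" "i + t \<le> k + 1" and av: "\<forall>j. i \<le> j \<longrightarrow> j < i + t \<longrightarrow> j \<notin> \<sigma> - {k+1}"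
      by (rule gapE) blast
    have kin: "k \<in> \<sigma> - {k+1}" using \<sigma> by simp
    have "i \<le> k" using i t by simp
    then have "\<not> k < i + t" using av kin by auto
    then have "i \<le> k' + 1" using k by simp
    moreover have "k' + 1 \<in> \<sigma> - {k+1}" using \<sigma> g1 k by simp
    ultimately have "\<not> k' + 1 < i + t" using av by auto
    then have ik: "i + t \<le> k' + 1" by simp
    have "gap t k' (\<gamma> - {k'+1})"
    proof (rule gapI[OF i(1) ik])
      fix j assume j: "i \<le> j" "j < i + t"
      then have "j \<noteq> k + 1" using ik k by simp
      then show "j \<notin> \<gamma> - {k'+1}" using av j \<sigma> by auto
    qed
    then show False using g3 by simp
  qed
  have ng: "\<sigma> - {k} \<notin> Uk t k"
  proof
    assume "\<sigma> - {k} \<in> Uk t k"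
    then have ng: "\<not> gap t k (\<sigma> - {k} - {k+1})" by (simp add: Uk_iff)
    have "gap t k (\<sigma> - {k} - {k+1})"
    proof (rule gapI[of "k' + 2"])
      show "1 \<le> k' + 2" by simp
      show "k' + 2 + t \<le> k + 1" using k by simp
      fix j assume j: "k' + 2 \<le> j" "j < k' + 2 + t"
      then have "j \<notin> \<gamma>" using g2 by auto
      then show "j \<notin> \<sigma> - {k} - {k+1}" using \<sigma> by simp
    qed
    then show False using ng by simp
  qed
  show "\<sigma> \<in> Uk t k - {\<sigma> \<in> Uk t k. \<sigma> - {k} \<in> Uk t k}"
    using s1 s2 s3 ng by (simp add: Uk_iff)
qed

lemma step2a_set:
  assumes t: "1 \<le> t"
  shows "Uk t t - {\<sigma> \<in> Uk t t. \<sigma> - {t} \<in> Uk t t} = (\<lambda>\<gamma>. \<gamma> \<union> {t, t+1}) ` {{}}"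
proof (intro set_eqI iffI)
  fix \<sigma> assume "\<sigma> \<in> Uk t t - {\<sigma> \<in> Uk t t. \<sigma> - {t} \<in> Uk t t}"
  then have mem: "\<sigma> \<in> Uk t t" and nB: "\<sigma> - {t} \<notin> Uk t t" by blast+
  then have A: "t + 1 \<in> \<sigma>" "\<sigma> \<subseteq> {1..t+1}" "\<not> gap t t (\<sigma> - {t+1})"
    by (simp_all add: Uk_iff)
  have "t + 1 \<in> \<sigma> - {t}" "\<sigma> - {t} \<subseteq> {1..t+1}" using A by auto
  then have g: "gap t t (\<sigma> - {t} - {t+1})" using nB by (simp add: Uk_iff)
  then obtain i where i: "1 \<le> i" "i + t \<le> t + 1" and av: "\<forall>j. i \<le> j \<longrightarrow> j < i + t \<longrightarrow> j \<notin> \<sigma> - {t} - {t+1}"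
    by (rule gapE) blast
  have i1: "i = 1" using i by simp
  have tin: "t \<in> \<sigma>"
  proof (rule ccontr)
    assume nk: "t \<notin> \<sigma>"
    have "gap t t (\<sigma> - {t+1})"
    proof (rule gapI[OF i])
      fix j assume "i \<le> j" "j < i + t"
      then show "j \<notin> \<sigma> - {t+1}" using av nk by auto
    qed
    then show False using A(3) by simp
  qed
  have "\<sigma> = {t, t+1}"
  proof
    show "\<sigma> \<subseteq> {t, t+1}"
    proof
      fix j assume j: "j \<in> \<sigma>"
      then have "1 \<le> j" "j \<le> t + 1" using A(2) by auto
      then show "j \<in> {t, t+1}" using av i1 j by force
    qed
    show "{t, t+1} \<subseteq> \<sigma>" using tin A(1) by simp
  qed
  then show "\<sigma> \<in> (\<lambda>\<gamma>. \<gamma> \<union> {t, t+1}) ` {{}}" by simp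
next
  fix \<sigma> assume "\<sigma> \<in> (\<lambda>\<gamma>. \<gamma> \<union> {t, t+1}) ` {{}}"
  then have \<sigma>: "\<sigma> = {t, t+1}" by simp
  have s3: "\<not> gap t t (\<sigma> - {t+1})"
  proof
    assume "gap t t (\<sigma> - {t+1})"
    then obtain i where i: "1 \<le> i" "i + t \<le> t + 1" and av: "\<forall>j. i \<le> j \<longrightarrow> j < i + t \<longrightarrow> j \<notin> \<sigma> - {t+1}"
      by (rule gapE) blast
    have "i = 1" using i by simp
    then have "t \<notin> \<sigma> - {t+1}" using av t by simp
    then show False using \<sigma> by simp
  qed
  have g0: "gap t t {}" by (rule gapI[of 1]) auto
  have e: "\<sigma> - {t} - {t+1} = {}" using \<sigma> by auto
  have "gap t t (\<sigma> - {t} - {t+1})" unfolding e by (rule g0)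
  then have ng: "\<sigma> - {t} \<notin> Uk t t" unfolding Uk_iff by blast
  have "\<sigma> \<subseteq> {1..t+1}" using \<sigma> t by auto
  then show "\<sigma> \<in> Uk t t - {\<sigma> \<in> Uk t t. \<sigma> - {t} \<in> Uk t t}"
    using s3 ng \<sigma> by (simp add: Uk_iff)
qed

lemma step2b:
  assumes t: "1 \<le> t"
  shows "rhom_dim TYPE('k::field) (Uk t (k' + t + 1)) p = rhom_dim TYPE('k) (Uk t k') (p - 2)"
proof -
  define k where "k = k' + t + 1"
  have k1: "1 \<le> k" by (simp add: k_def)
  have eq: "Uk t k - {\<sigma> \<in> Uk t k. \<sigma> - {k} \<in> Uk t k} = (\<lambda>\<gamma>. \<gamma> \<union> {k, k+1}) ` Uk t k'"
    by (rule step2b_set[OF t k_def])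
  interpret sl: shiftloc "Uk t k'" "{k, k+1}"
  proof
    show "finite {k, k+1}" by simp
    show "finite \<gamma>" if "\<gamma> \<in> Uk t k'" for \<gamma> using Uk_wf[of t k'] that by (simp add: wf_fam_def)
    show "u < v" if "\<gamma> \<in> Uk t k'" "u \<in> \<gamma>" "v \<in> {k, k+1}" for \<gamma> u v
    proof -
      have "u \<le> k' + 1" using that(1,2) by (auto simp: Uk_iff)
      then show ?thesis using that(3) t by (auto simp: k_def)
    qed
  qed
  have wf: "wf_fam ((\<lambda>\<gamma>. \<gamma> \<union> {k, k+1}) ` Uk t k')" using F'_props(1)[of t k] eq by simp
  have cv: "convex_fam ((\<lambda>\<gamma>. \<gamma> \<union> {k, k+1}) ` Uk t k')" using F'_props(2)[of t k] eq by simp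
  have "rhom_dim TYPE('k) (Uk t k) p = rhom_dim TYPE('k) ((\<lambda>\<gamma>. \<gamma> \<union> {k, k+1}) ` Uk t k') p"
    using step2_common[OF k1, of t p] eq by simp
  also have "\<dots> = rhom_dim TYPE('k) (Uk t k') (p - int (card {k, k+1}))"
    by (rule sl.shift_rhom[OF wf cv])
  also have "int (card {k, k+1}) = 2" by simp
  finally show ?thesis by (simp add: k_def)
qed

lemma step2a:
  assumes t: "1 \<le> t"
  shows "rhom_dim TYPE('k::field) (Uk t t) p = rhom_dim TYPE('k) {{}} (p - 2)"
proof -
  have eq: "Uk t t - {\<sigma> \<in> Uk t t. \<sigma> - {t} \<in> Uk t t} = (\<lambda>\<gamma>. \<gamma> \<union> {t, t+1}) ` {{}}"
    by (rule step2a_set[OF t])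
  interpret sl: shiftloc "{{}}" "{t, t+1}"
    by unfold_locales auto
  have wf: "wf_fam ((\<lambda>\<gamma>. \<gamma> \<union> {t, t+1}) ` {{}})" using F'_props(1)[of t t] eq by simp
  have cv: "convex_fam ((\<lambda>\<gamma>. \<gamma> \<union> {t, t+1}) ` {{}})" using F'_props(2)[of t t] eq by simp
  have "rhom_dim TYPE('k) (Uk t t) p = rhom_dim TYPE('k) ((\<lambda>\<gamma>. \<gamma> \<union> {t, t+1}) ` {{}}) p"
    using step2_common[OF t, of t p] eq by simp
  also have "\<dots> = rhom_dim TYPE('k) {{}} (p - int (card {t, t+1}))"
    by (rule sl.shift_rhom[OF wf cv])
  also have "int (card {t, t+1}) = 2" by simp
  finally show ?thesis .
qed

lemma no_gap: "k < t \<Longrightarrow> \<not> gap t k A"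
  unfolding gap_def by auto

lemma step3:
  assumes k: "1 \<le> k" "k < t"
  shows "rhom_dim TYPE('k::field) (Uk t k) p = 0"
proof -
  have t1: "\<And>\<sigma>. \<sigma> \<in> Uk t k \<Longrightarrow> insert 1 \<sigma> \<in> Uk t k"
    using k no_gap[OF k(2)] by (auto simp: Uk_iff)
  have t2: "\<And>\<sigma>. \<sigma> \<in> Uk t k \<Longrightarrow> \<sigma> - {1} \<in> Uk t k"
    using k no_gap[OF k(2)] by (auto simp: Uk_iff)
  have "cycles (Uk t k) p \<subseteq> (boundaries (Uk t k) p :: (_ \<Rightarrow> 'k) set)"
    by (rule cone_acyclic[OF Uk_wf t1 t2])
  moreover have "boundaries (Uk t k) p \<subseteq> (cycles (Uk t k) p :: (_ \<Rightarrow> 'k) set)"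
    by (rule bds_sub_cycles[OF Uk_wf Uk_convex])
  ultimately have "cycles (Uk t k) p = (boundaries (Uk t k) p :: (_ \<Rightarrow> 'k) set)" by blast
  then show ?thesis unfolding rhom_eq by simp
qed

lemma base1:
  assumes t: "1 \<le> t"
  shows "rhom_dim TYPE('k::field) (Uk t 0) p = rhom_dim TYPE('k) {{}} (p - 1)"
proof -
  have eq: "Uk t 0 = (\<lambda>\<gamma>. \<gamma> \<union> {1}) ` {{}}"
  proof -
    have "\<not> gap t 0 A" for A using t by (intro no_gap) simp
    then have "Uk t 0 = {\<sigma>. 1 \<in> \<sigma> \<and> \<sigma> \<subseteq> {1}}" by (auto simp: Uk_def)
    also have "\<dots> = {{1}}" by auto
    finally show ?thesis by simp
  qed
  interpret sl: shiftloc "{{}}" "{1}"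
    by unfold_locales auto
  have wf: "wf_fam ((\<lambda>\<gamma>. \<gamma> \<union> {1}) ` {{}})" by (simp add: wf_fam_def)
  have cv: "convex_fam ((\<lambda>\<gamma>. \<gamma> \<union> {1}) ` {{}})" by (auto simp: convex_fam_def)
  have "rhom_dim TYPE('k) ((\<lambda>\<gamma>. \<gamma> \<union> {1}) ` {{}}) p = rhom_dim TYPE('k) {{}} (p - int (card {1::nat}))"
    by (rule sl.shift_rhom[OF wf cv])
  then show ?thesis using eq by simp
qed

lemma OmegaU:
  assumes t: "1 \<le> t" and m: "t + 1 \<le> m"
  shows "rhom_dim TYPE('k::field) (Omega m t) q = rhom_dim TYPE('k) (Uk t (m - t - 1)) q"
proof -
  have "Omega m t = Om t m" using Omega_eq[OF t] m by simp
  moreover have "m = (m - t - 1) + t + 1" using m by simp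
  ultimately show ?thesis using step1[OF t, of "m - t - 1" q] by metis
qed

lemma Omega_tt: "Omega t t = {{}}"
  unfolding Omega_def by auto

theorem mainTheorem1:
  fixes n t :: nat
  assumes "1 \<le> t" and "t \<le> n"
  shows "(2 * t + 1 \<le> n \<longrightarrow>
            (\<forall>p::int. rhom_dim TYPE('k::field) (Omega n t) p
                      = rhom_dim TYPE('k) (Omega (n - t - 1) t) (p - 2)))
       \<and> (n = t \<longrightarrow>
            (\<forall>p::int. rhom_dim TYPE('k) (Omega n t) p = rhom_dim TYPE('k) irrelevant_complex p))
       \<and> (n = t + 1 \<longrightarrow>
            (\<forall>p::int. rhom_dim TYPE('k) (Omega n t) p = rhom_dim TYPE('k) irrelevant_complex (p - 1)))
       \<and> (t + 2 \<le> n \<and> n \<le> 2 * t \<longrightarrow>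
            (\<forall>p::int. rhom_dim TYPE('k) (Omega n t) p = 0))"
proof (intro conjI impI allI)
  fix p :: int
  assume n: "2 * t + 1 \<le> n"
  define k where "k = n - t - 1"
  have kt: "t \<le> k" using n by (simp add: k_def)
  have e1: "rhom_dim TYPE('k) (Omega n t) p = rhom_dim TYPE('k) (Uk t k) p"
    unfolding k_def by (rule OmegaU[OF assms(1)]) (use n in simp)
  show "rhom_dim TYPE('k) (Omega n t) p = rhom_dim TYPE('k) (Omega (n - t - 1) t) (p - 2)"
  proof (cases "k = t")
    case True
    have "rhom_dim TYPE('k) (Uk t k) p = rhom_dim TYPE('k) {{}} (p - 2)"
      using step2a[OF assms(1), of p] True by simp
    also have "{{}} = Omega (n - t - 1) t" using Omega_tt[of t] True by (simp add: k_def)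
    finally show ?thesis using e1 by simp
  next
    case False
    then have kt1: "t + 1 \<le> k" using kt by simp
    define k' where "k' = k - t - 1"
    have kk: "k = k' + t + 1" using kt1 by (simp add: k'_def)
    have "rhom_dim TYPE('k) (Uk t k) p = rhom_dim TYPE('k) (Uk t k') (p - 2)"
      unfolding kk by (rule step2b[OF assms(1)])
    also have "\<dots> = rhom_dim TYPE('k) (Omega k t) (p - 2)"
      unfolding k'_def by (rule OmegaU[OF assms(1) kt1, symmetric])
    finally show ?thesis using e1 by (simp add: k_def)
  qed
next
  fix p :: int
  assume "n = t"
  then show "rhom_dim TYPE('k) (Omega n t) p = rhom_dim TYPE('k) irrelevant_complex p"
    by (simp add: Omega_tt irrelevant_complex_def)
next
  fix p :: int
  assume n: "n = t + 1"
  have "rhom_dim TYPE('k) (Omega n t) p = rhom_dim TYPE('k) (Uk t 0) p"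
    using OmegaU[OF assms(1), of n p] n by simp
  also have "\<dots> = rhom_dim TYPE('k) {{}} (p - 1)" by (rule base1[OF assms(1)])
  finally show "rhom_dim TYPE('k) (Omega n t) p = rhom_dim TYPE('k) irrelevant_complex (p - 1)"
    by (simp add: irrelevant_complex_def)
next
  fix p :: int
  assume n: "t + 2 \<le> n \<and> n \<le> 2 * t"
  have "rhom_dim TYPE('k) (Omega n t) p = rhom_dim TYPE('k) (Uk t (n - t - 1)) p"
    using OmegaU[OF assms(1), of n p] n by simp
  also have "\<dots> = 0" by (rule step3) (use n in auto)
  finally show "rhom_dim TYPE('k) (Omega n t) p = 0" .
qed

end
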